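(* Let $(p_n)$, $(q_n)$ be sequences of positive integers with $\max(p_n,q_n)\to+\infty$. For each $n$ let $(\mathbf{X}_{ni}',\mathbf{Y}_{ni}')'$, $i=1,\ldots,n$, be i.i.d., with $\mathbf{X}_{ni}\in\mathbb{R}^{p_n}$ and $\mathbf{Y}_{ni}\in\mathbb{R}^{q_n}$ independent and having spherical directions. Let $\mathbf{U}_{ni}=\mathbf{X}_{ni}/\|\mathbf{X}_{ni}\|$, $\mathbf{V}_{ni}=\mathbf{Y}_{ni}/\|\mathbf{Y}_{ni}\|$, let $\mathcal{F}_{n\ell}$ be the $\sigma$-algebra generated by $(\mathbf{X}_{n1}',\mathbf{Y}_{n1}')',\ldots,(\mathbf{X}_{n\ell}',\mathbf{Y}_{n\ell}')'$ ($\mathcal{F}_{n0}$ trivial), ${\rm E}_{n\ell}$ the conditional expectation given $\mathcal{F}_{n\ell}$, and $$D^I_{n\ell}=\frac{\sqrt{2p_nq_n}}{n}\sum_{i=1}^{\ell-1}(\mathbf{U}_{ni}'\mathbf{U}_{n\ell})(\mathbf{V}_{ni}'\mathbf{V}_{n\ell}),\qquad \ell=1,\ldots,n$$ (an empty sum being zero). Letting $\sigma^2_{n\ell}={\rm E}_{n,\ell-1}[(D^I_{n\ell})^2]$, the sum $\sum_{\ell=1}^n\sigma^2_{n\ell}$ converges to $1$ in quadratic mean as $n\to\infty$.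
   Context: A distribution on $\mathbb{R}^p$ has spherical directions if it puts no mass at the origin and, for $\mathbf{X}$ with this distribution, $\mathbf{X}/\|\mathbf{X}\|$ is uniformly distributed on the unit sphere $\mathcal{S}^{p-1}$. *)

theory Defs
  imports "HOL-Probability.Probability"
begin

text \<open>Vectors of R^p are represented as extensional functions on the index set {..<p},
  i.e. elements of the space of the product measure of p copies of Lebesgue-Borel measure.\<close>

definition lebesgue_p :: "nat \<Rightarrow> (nat \<Rightarrow> real) measure" where
  "lebesgue_p p = PiM {..<p} (\<lambda>_. lborel)"

definition euc_norm :: "nat \<Rightarrow> (nat \<Rightarrow> real) \<Rightarrow> real" where
  "euc_norm p x = sqrt (\<Sum>j<p. (x j)\<^sup>2)"

definition euc_inner :: "nat \<Rightarrow> (nat \<Rightarrow> real) \<Rightarrow> (nat \<Rightarrow> real) \<Rightarrow> real" where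
  "euc_inner p x y = (\<Sum>j<p. x j * y j)"

definition sphere_dir :: "nat \<Rightarrow> (nat \<Rightarrow> real) \<Rightarrow> (nat \<Rightarrow> real)" where
  "sphere_dir p x = restrict (\<lambda>j. x j / euc_norm p x) {..<p}"

definition unit_ball_p :: "nat \<Rightarrow> (nat \<Rightarrow> real) set" where
  "unit_ball_p p = {x \<in> space (lebesgue_p p). euc_norm p x \<le> 1}"

text \<open>Uniform distribution on the unit sphere S^{p-1}: the normalised surface (cone) measure,
  i.e. the image of the uniform distribution on the unit ball under x \<mapsto> x / norm x.\<close>
definition unif_sphere :: "nat \<Rightarrow> (nat \<Rightarrow> real) measure" where
  "unif_sphere p = distr (uniform_measure (lebesgue_p p) (unit_ball_p p)) (lebesgue_p p) (sphere_dir p)"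

definition spherical_directions :: "'a measure \<Rightarrow> nat \<Rightarrow> ('a \<Rightarrow> (nat \<Rightarrow> real)) \<Rightarrow> bool" where
  "spherical_directions M p X \<longleftrightarrow>
     X \<in> measurable M (lebesgue_p p) \<and>
     emeasure M {\<omega> \<in> space M. euc_norm p (X \<omega>) = 0} = 0 \<and>
     distr M (lebesgue_p p) (\<lambda>\<omega>. sphere_dir p (X \<omega>)) = unif_sphere p"

definition past_algebra :: "'a measure \<Rightarrow> nat \<Rightarrow> nat \<Rightarrow> (nat \<Rightarrow> 'a \<Rightarrow> (nat \<Rightarrow> real))
    \<Rightarrow> (nat \<Rightarrow> 'a \<Rightarrow> (nat \<Rightarrow> real)) \<Rightarrow> nat \<Rightarrow> 'a measure" where
  "past_algebra M p q X Y l = vimage_algebra (space M)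
      (\<lambda>\<omega>. \<lambda>i\<in>{1..l}. (X i \<omega>, Y i \<omega>))
      (PiM {1..l} (\<lambda>_. lebesgue_p p \<Otimes>\<^sub>M lebesgue_p q))"

definition DI :: "nat \<Rightarrow> nat \<Rightarrow> nat \<Rightarrow> (nat \<Rightarrow> 'a \<Rightarrow> (nat \<Rightarrow> real))
    \<Rightarrow> (nat \<Rightarrow> 'a \<Rightarrow> (nat \<Rightarrow> real)) \<Rightarrow> nat \<Rightarrow> 'a \<Rightarrow> real" where
  "DI n p q X Y l \<omega> = sqrt (2 * real p * real q) / real n *
     (\<Sum>i\<in>{1..<l}. euc_inner p (sphere_dir p (X i \<omega>)) (sphere_dir p (X l \<omega>))
                  * euc_inner q (sphere_dir q (Y i \<omega>)) (sphere_dir q (Y l \<omega>)))"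

end

theory Submission
  imports Defs
begin


lemma comp_lp_meas[measurable]: "j < p \<Longrightarrow> (\<lambda>x. x j) \<in> borel_measurable (lebesgue_p p)"
  using measurable_component_singleton[of j "{..<p}" "\<lambda>_. lborel"] by (simp add: lebesgue_p_def)

lemma euc_norm_meas[measurable]: "euc_norm p \<in> borel_measurable (lebesgue_p p)"
  unfolding euc_norm_def[abs_def] by measurable

lemma sd_comp_meas[measurable]: "(\<lambda>x. sphere_dir p x j) \<in> borel_measurable (lebesgue_p p)"
  unfolding sphere_dir_def by (cases "j < p") (auto intro!: borel_measurable_divide)

lemma sd_meas[measurable]: "sphere_dir p \<in> measurable (lebesgue_p p) (lebesgue_p p)"
proof -
  have "(\<lambda>x. \<lambda>j\<in>{..<p}. sphere_dir p x j) \<in> measurable (lebesgue_p p) (PiM {..<p} (\<lambda>_. lborel))"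
    by (rule measurable_restrict) simp
  moreover have "(\<lambda>x. \<lambda>j\<in>{..<p}. sphere_dir p x j) = sphere_dir p"
    by (auto simp: sphere_dir_def fun_eq_iff)
  ultimately show ?thesis by (simp add: lebesgue_p_def)
qed

lemma sd_bound: assumes "j < p" shows "\<bar>sphere_dir p x j\<bar> \<le> 1"
proof (cases "j < p \<and> euc_norm p x \<noteq> 0")
  case True
  have "(x j)\<^sup>2 \<le> (\<Sum>i<p. (x i)\<^sup>2)"
    using True by (intro member_le_sum) auto
  then have "\<bar>x j\<bar> \<le> euc_norm p x" unfolding euc_norm_def
    by (metis real_sqrt_abs real_sqrt_le_mono)
  then show ?thesis using True by (auto simp: sphere_dir_def abs_divide divide_le_eq_1)
next
  case False then show ?thesis using \<open>j<p\<close> by (auto simp: sphere_dir_def)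
qed

lemma sd_sumsq: "euc_norm p x \<noteq> 0 \<Longrightarrow> (\<Sum>j<p. (sphere_dir p x j)\<^sup>2) = 1"
proof -
  assume h: "euc_norm p x \<noteq> 0"
  have s: "(\<Sum>j<p. (x j)\<^sup>2) \<ge> 0" by (intro sum_nonneg) auto
  have "(\<Sum>j<p. (sphere_dir p x j)\<^sup>2) = (\<Sum>j<p. (x j)\<^sup>2) / (euc_norm p x)\<^sup>2"
    by (simp add: sphere_dir_def power_divide sum_divide_distrib)
  also have "\<dots> = 1" using h s by (simp add: euc_norm_def)
  finally show ?thesis .
qed

lemma inner_bound: "\<bar>euc_inner p (sphere_dir p x) (sphere_dir p y)\<bar> \<le> real p"
proof -
  have "\<bar>euc_inner p (sphere_dir p x) (sphere_dir p y)\<bar> \<le> (\<Sum>j<p. \<bar>sphere_dir p x j * sphere_dir p y j\<bar>)"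
    unfolding euc_inner_def by (rule sum_abs)
  also have "\<dots> \<le> (\<Sum>j<p. 1)"
    by (intro sum_mono) (auto simp: abs_mult intro!: mult_le_one sd_bound)
  finally show ?thesis by simp
qed

lemma sets_unif[simp]: "sets (unif_sphere p) = sets (lebesgue_p p)"
  by (simp add: unif_sphere_def)

lemma ball_sets: "unit_ball_p p \<in> sets (lebesgue_p p)"
  unfolding unit_ball_p_def by measurable

lemma unif_invariant:
  fixes T :: "(nat \<Rightarrow> real) \<Rightarrow> (nat \<Rightarrow> real)"
  assumes T[measurable]: "T \<in> measurable (lebesgue_p p) (lebesgue_p p)"
    and D: "distr (lebesgue_p p) (lebesgue_p p) T = lebesgue_p p"
    and N: "\<And>x. x \<in> space (lebesgue_p p) \<Longrightarrow> euc_norm p (T x) = euc_norm p x"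
    and C: "\<And>x. x \<in> space (lebesgue_p p) \<Longrightarrow> sphere_dir p (T x) = T (sphere_dir p x)"
  shows "distr (unif_sphere p) (lebesgue_p p) T = unif_sphere p"
proof -
  define L where "L = lebesgue_p p"
  define B where "B = unit_ball_p p"
  define U where "U = uniform_measure L B"
  have Bs: "B \<in> sets L" unfolding B_def L_def by (rule ball_sets)
  have TU: "T \<in> measurable U L" unfolding U_def L_def
    by (subst measurable_cong_sets[where M'="lebesgue_p p" and N'="lebesgue_p p"]) auto
  have sdU: "sphere_dir p \<in> measurable U L" unfolding U_def L_def
    by (subst measurable_cong_sets[where M'="lebesgue_p p" and N'="lebesgue_p p"]) auto
  have dU: "distr U L T = U"
  proof (rule measure_eqI)
    show "sets (distr U L T) = sets U" by (simp add: U_def)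
  next
    fix A assume "A \<in> sets (distr U L T)"
    then have A: "A \<in> sets L" by simp
    have TA: "T -` A \<inter> space L \<in> sets L" using A T unfolding L_def by measurable
    have eq: "B \<inter> (T -` A \<inter> space L) = T -` (B \<inter> A) \<inter> space L"
      using N unfolding B_def unit_ball_p_def L_def
      using measurable_space[OF T] by auto
    have "emeasure (distr U L T) A = emeasure U (T -` A \<inter> space U)"
      by (rule emeasure_distr[OF TU A])
    also have "\<dots> = emeasure L (B \<inter> (T -` A \<inter> space L)) / emeasure L B"
      unfolding U_def using Bs TA by simp
    also have "emeasure L (B \<inter> (T -` A \<inter> space L)) = emeasure L (B \<inter> A)"
    proof -
      have "emeasure L (T -` (B \<inter> A) \<inter> space L) = emeasure (distr L L T) (B \<inter> A)"
        using A Bs by (intro emeasure_distr[symmetric]) (auto simp: L_def)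
      then show ?thesis using D eq by (simp add: L_def)
    qed
    also have "emeasure L (B \<inter> A) / emeasure L B = emeasure U A"
      unfolding U_def using Bs A by simp
    finally show "emeasure (distr U L T) A = emeasure U A" .
  qed
  have "distr (unif_sphere p) (lebesgue_p p) T = distr U L (\<lambda>x. T (sphere_dir p x))"
    unfolding unif_sphere_def U_def[symmetric] L_def[symmetric] B_def[symmetric]
    by (subst distr_distr) (auto simp: comp_def TU sdU T[folded L_def])
  also have "\<dots> = distr U L (\<lambda>x. sphere_dir p (T x))"
    by (rule distr_cong) (auto simp: U_def L_def C)
  also have "\<dots> = distr (distr U L T) L (sphere_dir p)"
    using TU by (subst distr_distr) (auto simp: comp_def L_def)
  also have "\<dots> = unif_sphere p" using dU unfolding unif_sphere_def U_def L_def B_def by simp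
  finally show ?thesis .
qed

lemma sym_expect:
  fixes T :: "(nat \<Rightarrow> real) \<Rightarrow> (nat \<Rightarrow> real)" and g :: "(nat \<Rightarrow> real) \<Rightarrow> real"
  assumes sph: "spherical_directions M p X"
  assumes T[measurable]: "T \<in> measurable (lebesgue_p p) (lebesgue_p p)"
    and D: "distr (lebesgue_p p) (lebesgue_p p) T = lebesgue_p p"
    and N: "\<And>x. x \<in> space (lebesgue_p p) \<Longrightarrow> euc_norm p (T x) = euc_norm p x"
    and C: "\<And>x. x \<in> space (lebesgue_p p) \<Longrightarrow> sphere_dir p (T x) = T (sphere_dir p x)"
    and g[measurable]: "g \<in> borel_measurable (lebesgue_p p)"
  shows "(\<integral>\<omega>. g (sphere_dir p (X \<omega>)) \<partial>M) = (\<integral>\<omega>. g (T (sphere_dir p (X \<omega>))) \<partial>M)"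
proof -
  have X[measurable]: "X \<in> measurable M (lebesgue_p p)"
    and dX: "distr M (lebesgue_p p) (\<lambda>\<omega>. sphere_dir p (X \<omega>)) = unif_sphere p"
    using sph unfolding spherical_directions_def by auto
  have Tu: "T \<in> measurable (unif_sphere p) (lebesgue_p p)"
    by (subst measurable_cong_sets[where M'="lebesgue_p p" and N'="lebesgue_p p"]) auto
  have gu: "g \<in> borel_measurable (unif_sphere p)"
    by (subst measurable_cong_sets[where M'="lebesgue_p p" and N'=borel]) auto
  have "(\<integral>\<omega>. g (sphere_dir p (X \<omega>)) \<partial>M) = integral\<^sup>L (unif_sphere p) g"
    by (subst dX[symmetric], subst integral_distr) auto
  also have "\<dots> = integral\<^sup>L (distr (unif_sphere p) (lebesgue_p p) T) g"
    by (simp add: unif_invariant[OF T D N C])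
  also have "\<dots> = integral\<^sup>L (unif_sphere p) (\<lambda>x. g (T x))"
    by (rule integral_distr[OF Tu g])
  also have "\<dots> = (\<integral>\<omega>. g (T (sphere_dir p (X \<omega>))) \<partial>M)"
    by (subst dX[symmetric], subst integral_distr) auto
  finally show ?thesis .
qed

interpretation lbp: product_sigma_finite "\<lambda>_::nat. lborel :: real measure"
  by standard

definition refl_p :: "nat \<Rightarrow> nat \<Rightarrow> (nat \<Rightarrow> real) \<Rightarrow> (nat \<Rightarrow> real)" where
  "refl_p p a x = (\<lambda>j\<in>{..<p}. if j = a then - x j else x j)"

definition tau :: "nat \<Rightarrow> nat \<Rightarrow> nat \<Rightarrow> nat" where
  "tau a b j = (if j = a then b else if j = b then a else j)"

definition swap_p :: "nat \<Rightarrow> nat \<Rightarrow> nat \<Rightarrow> (nat \<Rightarrow> real) \<Rightarrow> (nat \<Rightarrow> real)" where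
  "swap_p p a b x = (\<lambda>j\<in>{..<p}. x (tau a b j))"

lemma tau_tau[simp]: "tau a b (tau a b j) = j"
  by (auto simp: tau_def)

lemma tau_lt: "a < p \<Longrightarrow> b < p \<Longrightarrow> j < p \<Longrightarrow> tau a b j < p"
  by (auto simp: tau_def)

lemma refl_meas[measurable]: "refl_p p a \<in> measurable (lebesgue_p p) (lebesgue_p p)"
proof -
  have "(\<lambda>x. \<lambda>j\<in>{..<p}. if j = a then - x j else x j) \<in> measurable (lebesgue_p p) (PiM {..<p} (\<lambda>_. lborel))"
    by (rule measurable_restrict) simp
  then show ?thesis by (simp add: lebesgue_p_def refl_p_def[abs_def])
qed

lemma swap_meas[measurable]:
  assumes "a < p" "b < p"
  shows "swap_p p a b \<in> measurable (lebesgue_p p) (lebesgue_p p)"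
proof -
  have "(\<lambda>x. \<lambda>j\<in>{..<p}. x (tau a b j)) \<in> measurable (lebesgue_p p) (PiM {..<p} (\<lambda>_. lborel))"
    by (rule measurable_restrict) (simp add: tau_lt assms)
  then show ?thesis by (simp add: lebesgue_p_def swap_p_def[abs_def])
qed

lemma emeasure_lborel_uminus: "S \<in> sets borel \<Longrightarrow> emeasure lborel (uminus -` S) = emeasure lborel (S::real set)"
proof -
  assume S: "S \<in> sets borel"
  have "emeasure (distr lborel borel uminus) S = emeasure lborel (uminus -` S \<inter> space lborel)"
    using S by (intro emeasure_distr) auto
  then show ?thesis by (simp add: lborel_distr_uminus)
qed

lemma uminus_sets: "S \<in> sets borel \<Longrightarrow> uminus -` S \<in> sets (borel::real measure)"
  using measurable_sets[of "uminus::real\<Rightarrow>real" borel borel S] by simp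

lemma refl_distr: "distr (lebesgue_p p) (lebesgue_p p) (refl_p p a) = lebesgue_p p"
  unfolding lebesgue_p_def
proof (rule lbp.PiM_eqI)
  fix A :: "nat \<Rightarrow> real set" assume A: "\<And>i. i \<in> {..<p} \<Longrightarrow> A i \<in> sets lborel"
  define A' where "A' i = (if i = a then uminus -` A i else A i)" for i
  have "refl_p p a -` PiE {..<p} A \<inter> space (PiM {..<p} (\<lambda>_. lborel)) = PiE {..<p} A'"
  proof -
    have key: "(\<forall>j\<in>{..<p}. (if j = a then - x j else x j) \<in> A j) \<longleftrightarrow> (\<forall>k\<in>{..<p}. x k \<in> A' k)" for x
      unfolding A'_def by auto
    show ?thesis
      unfolding refl_p_def using key
      by (auto simp: space_PiM restrict_PiE_iff PiE_iff)
  qed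
  moreover have "A' i \<in> sets lborel" if "i < p" for i
    using A that by (auto simp: A'_def uminus_sets)
  moreover have "emeasure lborel (A' i) = emeasure lborel (A i)" if "i < p" for i
    using A that by (auto simp: A'_def emeasure_lborel_uminus)
  ultimately show "emeasure (distr (PiM {..<p} (\<lambda>_. lborel)) (PiM {..<p} (\<lambda>_. lborel)) (refl_p p a)) (PiE {..<p} A) = (\<Prod>i\<in>{..<p}. emeasure lborel (A i))"
  proof -
    assume pre: "refl_p p a -` PiE {..<p} A \<inter> space (PiM {..<p} (\<lambda>_. lborel)) = PiE {..<p} A'"
      and s': "\<And>i. i < p \<Longrightarrow> A' i \<in> sets lborel"
      and e': "\<And>i. i < p \<Longrightarrow> emeasure lborel (A' i) = emeasure lborel (A i)"
    have PA: "PiE {..<p} A \<in> sets (PiM {..<p} (\<lambda>_. lborel))"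
      using A by (intro sets_PiM_I_finite) auto
    have "emeasure (distr (PiM {..<p} (\<lambda>_. lborel)) (PiM {..<p} (\<lambda>_. lborel)) (refl_p p a)) (PiE {..<p} A)
        = emeasure (PiM {..<p} (\<lambda>_. lborel)) (PiE {..<p} A')"
      using refl_meas[of p a] PA unfolding lebesgue_p_def pre[symmetric]
      by (intro emeasure_distr)
    also have "\<dots> = (\<Prod>i\<in>{..<p}. emeasure lborel (A' i))"
      using s' by (intro lbp.emeasure_PiM) auto
    also have "\<dots> = (\<Prod>i\<in>{..<p}. emeasure lborel (A i))"
      using e' by (intro prod.cong) auto
    finally show ?thesis .
  qed
qed auto

lemma swap_distr:
  assumes ab: "a < p" "b < p"
  shows "distr (lebesgue_p p) (lebesgue_p p) (swap_p p a b) = lebesgue_p p"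
  unfolding lebesgue_p_def
proof (rule lbp.PiM_eqI)
  fix A :: "nat \<Rightarrow> real set" assume A: "\<And>i. i \<in> {..<p} \<Longrightarrow> A i \<in> sets lborel"
  define A' where "A' i = A (tau a b i)" for i
  have "swap_p p a b -` PiE {..<p} A \<inter> space (PiM {..<p} (\<lambda>_. lborel)) = PiE {..<p} A'"
  proof -
    have key: "(\<forall>j\<in>{..<p}. x (tau a b j) \<in> A j) \<longleftrightarrow> (\<forall>k\<in>{..<p}. x k \<in> A' k)" for x
    proof
      assume h: "\<forall>j\<in>{..<p}. x (tau a b j) \<in> A j"
      show "\<forall>k\<in>{..<p}. x k \<in> A' k"
      proof
        fix k assume "k \<in> {..<p}"
        then have "tau a b k \<in> {..<p}" using tau_lt ab by auto
        from h[rule_format, OF this] show "x k \<in> A' k" by (simp add: A'_def)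
      qed
    next
      assume h: "\<forall>k\<in>{..<p}. x k \<in> A' k"
      show "\<forall>j\<in>{..<p}. x (tau a b j) \<in> A j"
      proof
        fix k assume "k \<in> {..<p}"
        then have "tau a b k \<in> {..<p}" using tau_lt ab by auto
        from h[rule_format, OF this] show "x (tau a b k) \<in> A k" by (simp add: A'_def)
      qed
    qed
    show ?thesis
      unfolding swap_p_def using key
      by (auto simp: space_PiM restrict_PiE_iff PiE_iff)
  qed
  moreover have "A' i \<in> sets lborel" if "i < p" for i
    using A that tau_lt[OF ab that] by (auto simp: A'_def)
  moreover have "(\<Prod>i\<in>{..<p}. emeasure lborel (A' i)) = (\<Prod>i\<in>{..<p}. emeasure lborel (A i))"
    unfolding A'_def
  proof (rule prod.reindex_bij_witness[where i="tau a b" and j="tau a b"])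
    fix i assume "i \<in> {..<p}" then show "tau a b i \<in> {..<p}" using tau_lt ab by simp
  qed (use tau_lt ab in simp_all)
  ultimately show "emeasure (distr (PiM {..<p} (\<lambda>_. lborel)) (PiM {..<p} (\<lambda>_. lborel)) (swap_p p a b)) (PiE {..<p} A) = (\<Prod>i\<in>{..<p}. emeasure lborel (A i))"
  proof -
    assume pre: "swap_p p a b -` PiE {..<p} A \<inter> space (PiM {..<p} (\<lambda>_. lborel)) = PiE {..<p} A'"
      and s': "\<And>i. i < p \<Longrightarrow> A' i \<in> sets lborel"
      and e': "(\<Prod>i\<in>{..<p}. emeasure lborel (A' i)) = (\<Prod>i\<in>{..<p}. emeasure lborel (A i))"
    have PA: "PiE {..<p} A \<in> sets (PiM {..<p} (\<lambda>_. lborel))"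
      using A by (intro sets_PiM_I_finite) auto
    have "emeasure (distr (PiM {..<p} (\<lambda>_. lborel)) (PiM {..<p} (\<lambda>_. lborel)) (swap_p p a b)) (PiE {..<p} A)
        = emeasure (PiM {..<p} (\<lambda>_. lborel)) (PiE {..<p} A')"
      using swap_meas[OF ab] PA unfolding lebesgue_p_def pre[symmetric]
      by (intro emeasure_distr)
    also have "\<dots> = (\<Prod>i\<in>{..<p}. emeasure lborel (A' i))"
      using s' by (intro lbp.emeasure_PiM) auto
    finally show ?thesis using e' by simp
  qed
qed auto

lemma space_lp: "x \<in> space (lebesgue_p p) \<longleftrightarrow> x \<in> extensional {..<p}"
  by (auto simp: lebesgue_p_def space_PiM PiE_def)

lemma refl_norm: "euc_norm p (refl_p p a x) = euc_norm p x"
  unfolding euc_norm_def refl_p_def by (auto intro!: arg_cong[where f=sqrt] sum.cong)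

lemma refl_sd: "x \<in> space (lebesgue_p p) \<Longrightarrow> sphere_dir p (refl_p p a x) = refl_p p a (sphere_dir p x)"
  unfolding sphere_dir_def refl_norm by (auto simp: refl_p_def fun_eq_iff refl_norm[unfolded refl_p_def])

lemma swap_norm: assumes "a < p" "b < p" shows "euc_norm p (swap_p p a b x) = euc_norm p x"
proof -
  have "(\<Sum>j<p. (swap_p p a b x j)\<^sup>2) = (\<Sum>j<p. (x j)\<^sup>2)"
    unfolding swap_p_def
  proof (rule sum.reindex_bij_witness[where i="tau a b" and j="tau a b"])
    fix i assume "i \<in> {..<p}" then show "tau a b i \<in> {..<p}" using tau_lt assms by simp
  qed (use tau_lt assms in simp_all)
  then show ?thesis unfolding euc_norm_def by simp
qed

lemma swap_sd: assumes "a < p" "b < p"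
  shows "sphere_dir p (swap_p p a b x) = swap_p p a b (sphere_dir p x)"
  unfolding sphere_dir_def swap_norm[OF assms]
  using tau_lt[OF assms] by (auto simp: swap_p_def fun_eq_iff)

lemma bnd_int:
  fixes f :: "'a \<Rightarrow> real"
  assumes "prob_space M" "f \<in> borel_measurable M" "\<And>\<omega>. \<omega> \<in> space M \<Longrightarrow> \<bar>f \<omega>\<bar> \<le> C"
  shows "integrable M f"
proof -
  interpret prob_space M by fact
  show ?thesis using assms(2,3) by (intro integrable_const_bound[where B=C]) auto
qed

lemma sphere_moments:
  assumes M: "prob_space M" and sph: "spherical_directions M p X"
  shows sph_E1: "a < p \<Longrightarrow> (\<integral>\<omega>. sphere_dir p (X \<omega>) a \<partial>M) = 0"
    and sph_E2: "a < p \<Longrightarrow> b < p \<Longrightarrow>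
       (\<integral>\<omega>. sphere_dir p (X \<omega>) a * sphere_dir p (X \<omega>) b \<partial>M) = (if a = b then 1 / real p else 0)"
proof -
  interpret prob_space M by fact
  have X[measurable]: "X \<in> measurable M (lebesgue_p p)"
    and N0: "emeasure M {\<omega> \<in> space M. euc_norm p (X \<omega>) = 0} = 0"
    using sph unfolding spherical_directions_def by auto
  have sdx: "sphere_dir p (X \<omega>) \<in> space (lebesgue_p p)" if "\<omega> \<in> space M" for \<omega>
    using measurable_space[OF sd_meas] measurable_space[OF X] that by blast
  have refl_app: "refl_p p a y a = - y a" if "a < p" for y a
    using that by (simp add: refl_p_def)
  have refl_app2: "refl_p p a y b = y b" if "b < p" "b \<noteq> a" for y a b
    using that by (simp add: refl_p_def)
  show E1: "(\<integral>\<omega>. sphere_dir p (X \<omega>) a \<partial>M) = 0" if a: "a < p" for a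
  proof -
    have "(\<integral>\<omega>. sphere_dir p (X \<omega>) a \<partial>M) = (\<integral>\<omega>. refl_p p a (sphere_dir p (X \<omega>)) a \<partial>M)"
      using a by (intro sym_expect[OF sph refl_meas refl_distr refl_norm refl_sd, where g="\<lambda>x. x a"]) (auto intro!: comp_lp_meas)
    also have "\<dots> = - (\<integral>\<omega>. sphere_dir p (X \<omega>) a \<partial>M)"
      using a by (simp add: refl_app)
    finally show ?thesis by simp
  qed
  have off: "(\<integral>\<omega>. sphere_dir p (X \<omega>) a * sphere_dir p (X \<omega>) b \<partial>M) = 0"
    if a: "a < p" "b < p" "a \<noteq> b" for a b
  proof -
    have "(\<integral>\<omega>. sphere_dir p (X \<omega>) a * sphere_dir p (X \<omega>) b \<partial>M) =
       (\<integral>\<omega>. refl_p p a (sphere_dir p (X \<omega>)) a * refl_p p a (sphere_dir p (X \<omega>)) b \<partial>M)"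
      using a by (intro sym_expect[OF sph refl_meas refl_distr refl_norm refl_sd, where g="\<lambda>x. x a * x b"]) (auto intro!: comp_lp_meas borel_measurable_times)
    also have "\<dots> = - (\<integral>\<omega>. sphere_dir p (X \<omega>) a * sphere_dir p (X \<omega>) b \<partial>M)"
      using a by (simp add: refl_app refl_app2)
    finally show ?thesis by simp
  qed
  have sq_eq: "(\<integral>\<omega>. (sphere_dir p (X \<omega>) a)\<^sup>2 \<partial>M) = (\<integral>\<omega>. (sphere_dir p (X \<omega>) 0)\<^sup>2 \<partial>M)"
    if a: "a < p" for a
  proof -
    have p0: "0 < p" using a by simp
    have "(\<integral>\<omega>. (sphere_dir p (X \<omega>) a)\<^sup>2 \<partial>M) = (\<integral>\<omega>. (swap_p p a 0 (sphere_dir p (X \<omega>)) a)\<^sup>2 \<partial>M)"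
      using a p0 by (intro sym_expect[OF sph swap_meas swap_distr swap_norm swap_sd, where g="\<lambda>x. (x a)\<^sup>2"]) (auto intro!: comp_lp_meas borel_measurable_power)
    also have "\<dots> = (\<integral>\<omega>. (sphere_dir p (X \<omega>) 0)\<^sup>2 \<partial>M)"
      using a by (simp add: swap_p_def tau_def)
    finally show ?thesis .
  qed
  have intsq: "integrable M (\<lambda>\<omega>. (sphere_dir p (X \<omega>) a)\<^sup>2)" if "a < p" for a
    by (rule bnd_int[OF M, where C=1]) (use that sd_bound[of a p] in \<open>auto simp: abs_square_le_1\<close>)
  have AEn: "AE \<omega> in M. euc_norm p (X \<omega>) \<noteq> 0"
  proof -
    have Ns: "{\<omega> \<in> space M. euc_norm p (X \<omega>) = 0} \<in> sets M" by measurable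
    show ?thesis by (subst AE_iff_measurable[OF Ns]) (use N0 in auto)
  qed
  have sum1: "(\<Sum>a<p. (\<integral>\<omega>. (sphere_dir p (X \<omega>) a)\<^sup>2 \<partial>M)) = 1"
  proof -
    have "(\<Sum>a<p. (\<integral>\<omega>. (sphere_dir p (X \<omega>) a)\<^sup>2 \<partial>M)) = (\<integral>\<omega>. (\<Sum>a<p. (sphere_dir p (X \<omega>) a)\<^sup>2) \<partial>M)"
      by (rule Bochner_Integration.integral_sum[where f="\<lambda>a \<omega>. (sphere_dir p (X \<omega>) a)\<^sup>2", symmetric]) (use intsq in auto)
    also have "\<dots> = (\<integral>\<omega>. 1 \<partial>M)"
      using AEn by (intro integral_cong_AE) (auto simp: sd_sumsq)
    also have "(\<integral>\<omega>. 1 \<partial>M) = (1::real)"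
      using lebesgue_integral_const[of M "1::real"] prob_space by simp
    finally show ?thesis .
  qed
  show "(\<integral>\<omega>. sphere_dir p (X \<omega>) a * sphere_dir p (X \<omega>) b \<partial>M) = (if a = b then 1 / real p else 0)"
    if ab: "a < p" "b < p" for a b
  proof (cases "a = b")
    case False then show ?thesis using off ab by simp
  next
    case True
    have "(\<Sum>a<p. (\<integral>\<omega>. (sphere_dir p (X \<omega>) a)\<^sup>2 \<partial>M)) = real p * (\<integral>\<omega>. (sphere_dir p (X \<omega>) 0)\<^sup>2 \<partial>M)"
    proof -
      have "(\<Sum>a<p. (\<integral>\<omega>. (sphere_dir p (X \<omega>) a)\<^sup>2 \<partial>M)) = (\<Sum>a<p. (\<integral>\<omega>. (sphere_dir p (X \<omega>) 0)\<^sup>2 \<partial>M))"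
        by (rule sum.cong[OF refl]) (rule sq_eq, simp)
      then show ?thesis by simp
    qed
    then have "(\<integral>\<omega>. (sphere_dir p (X \<omega>) 0)\<^sup>2 \<partial>M) = 1 / real p"
      using sum1 ab by (simp add: field_simps)
    moreover have "(\<integral>\<omega>. sphere_dir p (X \<omega>) a * sphere_dir p (X \<omega>) a \<partial>M) = (\<integral>\<omega>. (sphere_dir p (X \<omega>) 0)\<^sup>2 \<partial>M)"
      using sq_eq[OF ab(1)] by (simp add: power2_eq_square)
    ultimately show ?thesis using True by simp
  qed
qed

lemma indep_fubini:
  fixes F :: "'b \<times> 'b \<Rightarrow> real"
  assumes M: "prob_space M" and ind: "prob_space.indep_var M N1 G N2 Z"
    and F[measurable]: "F \<in> borel_measurable (N1 \<Otimes>\<^sub>M N2)"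
    and bnd: "\<And>x. x \<in> space (N1 \<Otimes>\<^sub>M N2) \<Longrightarrow> \<bar>F x\<bar> \<le> C"
  shows "(\<integral>\<omega>. F (G \<omega>, Z \<omega>) \<partial>M) = (\<integral>\<omega>. (\<integral>\<omega>'. F (G \<omega>, Z \<omega>') \<partial>M) \<partial>M)"
proof -
  interpret prob_space M by fact
  have G[measurable]: "G \<in> measurable M N1" and Z[measurable]: "Z \<in> measurable M N2"
    using indep_var_rv1[OF ind] indep_var_rv2[OF ind] by auto
  define P1 where "P1 = distr M N1 G"
  define P2 where "P2 = distr M N2 Z"
  interpret P1: prob_space P1 unfolding P1_def by (rule prob_space_distr) simp
  interpret P2: prob_space P2 unfolding P2_def by (rule prob_space_distr) simp
  interpret P12: pair_prob_space P1 P2 ..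
  have deq: "P1 \<Otimes>\<^sub>M P2 = distr M (N1 \<Otimes>\<^sub>M N2) (\<lambda>\<omega>. (G \<omega>, Z \<omega>))"
    using ind unfolding indep_var_distribution_eq P1_def P2_def by simp
  have GZ[measurable]: "(\<lambda>\<omega>. (G \<omega>, Z \<omega>)) \<in> measurable M (N1 \<Otimes>\<^sub>M N2)" by simp
  have intF: "integrable (P1 \<Otimes>\<^sub>M P2) F"
    unfolding deq
  proof (subst integrable_distr_eq)
    show "integrable M (\<lambda>x. F (G x, Z x))"
      by (rule bnd_int[OF M, where C=C]) (auto intro!: bnd measurable_space[OF GZ])
  qed auto
  have "(\<integral>\<omega>. F (G \<omega>, Z \<omega>) \<partial>M) = integral\<^sup>L (P1 \<Otimes>\<^sub>M P2) F"
    unfolding deq by (rule integral_distr[symmetric]) auto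
  also have "\<dots> = (\<integral>x. (\<integral>y. F (x, y) \<partial>P2) \<partial>P1)"
    by (rule P12.integral_fst'[OF intF, symmetric])
  also have "\<dots> = (\<integral>x. (\<integral>\<omega>'. F (x, Z \<omega>') \<partial>M) \<partial>P1)"
  proof (rule Bochner_Integration.integral_cong, simp)
    fix x assume "x \<in> space P1"
    then have x: "x \<in> space N1" by (simp add: P1_def)
    have "(\<lambda>y. F (x, y)) \<in> borel_measurable N2"
      using measurable_Pair2[OF F x] .
    then show "(\<integral>y. F (x, y) \<partial>P2) = (\<integral>\<omega>'. F (x, Z \<omega>') \<partial>M)"
      unfolding P2_def by (rule integral_distr[OF Z])
  qed
  also have "\<dots> = (\<integral>\<omega>. (\<integral>\<omega>'. F (G \<omega>, Z \<omega>') \<partial>M) \<partial>M)"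
    unfolding P1_def by (rule integral_distr[OF G]) measurable
  finally show ?thesis .
qed

definition sprod :: "nat \<Rightarrow> nat \<Rightarrow> (nat \<Rightarrow> real) \<times> (nat \<Rightarrow> real) \<Rightarrow> (nat \<Rightarrow> real) \<times> (nat \<Rightarrow> real) \<Rightarrow> real" where
  "sprod p q z1 z2 = euc_inner p (sphere_dir p (fst z1)) (sphere_dir p (fst z2)) *
                     euc_inner q (sphere_dir q (snd z1)) (sphere_dir q (snd z2))"

lemma sprod_meas[measurable]:
  assumes [measurable]: "f \<in> measurable K (lebesgue_p p \<Otimes>\<^sub>M lebesgue_p q)" "g \<in> measurable K (lebesgue_p p \<Otimes>\<^sub>M lebesgue_p q)"
  shows "(\<lambda>\<omega>. sprod p q (f \<omega>) (g \<omega>)) \<in> borel_measurable K"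
  unfolding sprod_def euc_inner_def by measurable

lemma sprod_bound: "\<bar>sprod p q z1 z2\<bar> \<le> real p * real q"
  unfolding sprod_def abs_mult by (intro mult_mono inner_bound) auto

lemma sprod_sym: "sprod p q z1 z2 = sprod p q z2 z1"
  unfolding sprod_def euc_inner_def by (simp add: mult.commute)

lemma sph_lin:
  assumes M: "prob_space M" and sph: "spherical_directions M p X"
  shows "(\<integral>\<omega>. euc_inner p a (sphere_dir p (X \<omega>)) \<partial>M) = 0"
proof -
  have X[measurable]: "X \<in> measurable M (lebesgue_p p)"
    using sph unfolding spherical_directions_def by auto
  have "(\<integral>\<omega>. euc_inner p a (sphere_dir p (X \<omega>)) \<partial>M) = (\<Sum>j<p. a j * (\<integral>\<omega>. sphere_dir p (X \<omega>) j \<partial>M))"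
    unfolding euc_inner_def
  proof (subst Bochner_Integration.integral_sum[where f="\<lambda>j \<omega>. a j * sphere_dir p (X \<omega>) j"])
    fix j assume j: "j \<in> {..<p}"
    show "integrable M (\<lambda>\<omega>. a j * sphere_dir p (X \<omega>) j)"
    proof (rule bnd_int[OF M, where C="\<bar>a j\<bar>"])
      show "\<bar>a j * sphere_dir p (X \<omega>) j\<bar> \<le> \<bar>a j\<bar>" for \<omega>
        using j by (auto simp: abs_mult intro!: mult_left_le sd_bound)
    qed measurable
  qed simp
  also have "\<dots> = 0" using sph_E1[OF M sph] by simp
  finally show ?thesis .
qed

lemma sph_quad:
  assumes M: "prob_space M" and sph: "spherical_directions M p X"
  shows "(\<integral>\<omega>. euc_inner p a (sphere_dir p (X \<omega>)) * euc_inner p b (sphere_dir p (X \<omega>)) \<partial>M) = euc_inner p a b / real p"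
proof -
  have X[measurable]: "X \<in> measurable M (lebesgue_p p)"
    using sph unfolding spherical_directions_def by auto
  have eq: "euc_inner p a (sphere_dir p (X \<omega>)) * euc_inner p b (sphere_dir p (X \<omega>)) =
     (\<Sum>j<p. \<Sum>k<p. (a j * b k) * (sphere_dir p (X \<omega>) j * sphere_dir p (X \<omega>) k))" for \<omega>
    unfolding euc_inner_def sum_product by (intro sum.cong refl) (simp add: algebra_simps)
  have int: "integrable M (\<lambda>\<omega>. (a j * b k) * (sphere_dir p (X \<omega>) j * sphere_dir p (X \<omega>) k))"
    if "j < p" "k < p" for j k
  proof (rule bnd_int[OF M, where C="\<bar>a j * b k\<bar>"])
    show "\<bar>a j * b k * (sphere_dir p (X \<omega>) j * sphere_dir p (X \<omega>) k)\<bar> \<le> \<bar>a j * b k\<bar>" for \<omega>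
      unfolding abs_mult[of "a j * b k"]
      by (intro mult_left_le) (auto simp: abs_mult intro!: mult_le_one sd_bound that)
  qed measurable
  have "(\<integral>\<omega>. euc_inner p a (sphere_dir p (X \<omega>)) * euc_inner p b (sphere_dir p (X \<omega>)) \<partial>M) =
     (\<Sum>j<p. \<Sum>k<p. (a j * b k) * (\<integral>\<omega>. sphere_dir p (X \<omega>) j * sphere_dir p (X \<omega>) k \<partial>M))"
    unfolding eq
    apply (subst Bochner_Integration.integral_sum)
     apply (rule Bochner_Integration.integrable_sum)
    using int apply simp
    apply (rule sum.cong[OF refl])
    apply (subst Bochner_Integration.integral_sum)
    using int apply simp
    apply simp
    done
  also have "\<dots> = (\<Sum>j<p. \<Sum>k<p. (a j * b k) * (if j = k then 1 / real p else 0))"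
    using sph_E2[OF M sph] by simp
  also have "\<dots> = (\<Sum>j<p. a j * b j / real p)"
    by (simp add: if_distrib[of "(*) _"] sum.delta cong: if_cong)
  also have "\<dots> = euc_inner p a b / real p"
    unfolding euc_inner_def by (simp add: sum_divide_distrib)
  finally show ?thesis .
qed

lemma inner_sd_meas[measurable]: "(\<lambda>y. euc_inner p a (sphere_dir p y)) \<in> borel_measurable (lebesgue_p p)"
  unfolding euc_inner_def by measurable

lemma inner_sd_bound: "\<bar>euc_inner p (sphere_dir p x) (sphere_dir p y)\<bar> \<le> real p"
  by (rule inner_bound)

lemma pair_indep_prod:
  fixes f1 f2 :: "(nat \<Rightarrow> real) \<Rightarrow> real"
  assumes M: "prob_space M"
    and X[measurable]: "X \<in> measurable M (lebesgue_p p)" and Y[measurable]: "Y \<in> measurable M (lebesgue_p q)"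
    and ind: "prob_space.indep_var M (lebesgue_p p) X (lebesgue_p q) Y"
    and f1[measurable]: "f1 \<in> borel_measurable (lebesgue_p p)" and f2[measurable]: "f2 \<in> borel_measurable (lebesgue_p q)"
    and b1: "\<And>x. \<bar>f1 x\<bar> \<le> C1" and b2: "\<And>x. \<bar>f2 x\<bar> \<le> C2"
  shows "(\<integral>\<omega>. f1 (X \<omega>) * f2 (Y \<omega>) \<partial>M) = (\<integral>\<omega>. f1 (X \<omega>) \<partial>M) * (\<integral>\<omega>. f2 (Y \<omega>) \<partial>M)"
proof -
  interpret prob_space M by fact
  have "indep_var borel (f1 \<circ> X) borel (f2 \<circ> Y)"
    by (rule indep_var_compose[OF ind f1 f2])
  moreover have "integrable M (f1 \<circ> X)" "integrable M (f2 \<circ> Y)"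
    by (rule bnd_int[OF M, where C=C1]; use b1 in simp) (rule bnd_int[OF M, where C=C2]; use b2 in simp)
  ultimately show ?thesis
    using indep_var_lebesgue_integral[of "f1 \<circ> X" "f2 \<circ> Y"] by (simp add: comp_def)
qed

lemma pair_lin:
  assumes M: "prob_space M" and sX: "spherical_directions M p X" and sY: "spherical_directions M q Y"
    and ind: "prob_space.indep_var M (lebesgue_p p) X (lebesgue_p q) Y"
  shows "(\<integral>\<omega>. sprod p q x (X \<omega>, Y \<omega>) \<partial>M) = 0"
proof -
  have X: "X \<in> measurable M (lebesgue_p p)" and Y: "Y \<in> measurable M (lebesgue_p q)"
    using sX sY unfolding spherical_directions_def by auto
  have "(\<integral>\<omega>. sprod p q x (X \<omega>, Y \<omega>) \<partial>M) =
     (\<integral>\<omega>. euc_inner p (sphere_dir p (fst x)) (sphere_dir p (X \<omega>)) \<partial>M) *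
     (\<integral>\<omega>. euc_inner q (sphere_dir q (snd x)) (sphere_dir q (Y \<omega>)) \<partial>M)"
    unfolding sprod_def fst_conv snd_conv
    by (rule pair_indep_prod[OF M X Y ind inner_sd_meas inner_sd_meas inner_sd_bound inner_sd_bound])
  also have "\<dots> = 0" using sph_lin[OF M sX] by simp
  finally show ?thesis .
qed

lemma pair_quad:
  assumes M: "prob_space M" and sX: "spherical_directions M p X" and sY: "spherical_directions M q Y"
    and ind: "prob_space.indep_var M (lebesgue_p p) X (lebesgue_p q) Y"
  shows "(\<integral>\<omega>. sprod p q x1 (X \<omega>, Y \<omega>) * sprod p q x2 (X \<omega>, Y \<omega>) \<partial>M) = sprod p q x1 x2 / (real p * real q)"
proof -
  have X: "X \<in> measurable M (lebesgue_p p)" and Y: "Y \<in> measurable M (lebesgue_p q)"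
    using sX sY unfolding spherical_directions_def by auto
  define f1 where "f1 y = euc_inner p (sphere_dir p (fst x1)) (sphere_dir p y) * euc_inner p (sphere_dir p (fst x2)) (sphere_dir p y)" for y
  define f2 where "f2 y = euc_inner q (sphere_dir q (snd x1)) (sphere_dir q y) * euc_inner q (sphere_dir q (snd x2)) (sphere_dir q y)" for y
  have f1m: "f1 \<in> borel_measurable (lebesgue_p p)" unfolding f1_def by measurable
  have f2m: "f2 \<in> borel_measurable (lebesgue_p q)" unfolding f2_def by measurable
  have b1: "\<bar>f1 y\<bar> \<le> real p * real p" for y
    unfolding f1_def abs_mult by (intro mult_mono inner_bound) auto
  have b2: "\<bar>f2 y\<bar> \<le> real q * real q" for y
    unfolding f2_def abs_mult by (intro mult_mono inner_bound) auto
  have eq: "sprod p q x1 (X \<omega>, Y \<omega>) * sprod p q x2 (X \<omega>, Y \<omega>) = f1 (X \<omega>) * f2 (Y \<omega>)" for \<omega>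
    unfolding sprod_def f1_def f2_def by simp
  have "(\<integral>\<omega>. sprod p q x1 (X \<omega>, Y \<omega>) * sprod p q x2 (X \<omega>, Y \<omega>) \<partial>M) =
      (\<integral>\<omega>. f1 (X \<omega>) \<partial>M) * (\<integral>\<omega>. f2 (Y \<omega>) \<partial>M)"
    unfolding eq by (rule pair_indep_prod[OF M X Y ind f1m f2m b1 b2])
  also have "\<dots> = sprod p q x1 x2 / (real p * real q)"
    unfolding f1_def f2_def sph_quad[OF M sX] sph_quad[OF M sY] sprod_def by simp
  finally show ?thesis .
qed

lemma indep_split:
  fixes F :: "(nat \<Rightarrow> 'b) \<times> 'b \<Rightarrow> real"
  assumes M: "prob_space M" and ind: "prob_space.indep_vars M (\<lambda>_. N) W I"
    and t: "t \<in> I" and S: "S \<subseteq> I" "t \<notin> S"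
    and F[measurable]: "F \<in> borel_measurable (PiM S (\<lambda>_. N) \<Otimes>\<^sub>M N)"
    and bnd: "\<And>x. x \<in> space (PiM S (\<lambda>_. N) \<Otimes>\<^sub>M N) \<Longrightarrow> \<bar>F x\<bar> \<le> C"
  shows "(\<integral>\<omega>. F (restrict (\<lambda>i. W i \<omega>) S, W t \<omega>) \<partial>M) =
         (\<integral>\<omega>. (\<integral>\<omega>'. F (restrict (\<lambda>i. W i \<omega>) S, W t \<omega>') \<partial>M) \<partial>M)"
proof -
  interpret prob_space M by fact
  have iv: "indep_var (PiM S (\<lambda>_. N)) (\<lambda>\<omega>. restrict (\<lambda>i. W i \<omega>) S) (PiM {t} (\<lambda>_. N)) (\<lambda>\<omega>. restrict (\<lambda>i. W i \<omega>) {t})"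
    using indep_var_restrict[OF ind, of S "{t}"] S t by auto
  define F' where "F' x = F (fst x, snd x t)" for x
  have F'm: "F' \<in> borel_measurable (PiM S (\<lambda>_. N) \<Otimes>\<^sub>M PiM {t} (\<lambda>_. N))"
    unfolding F'_def by measurable
  have F'b: "\<bar>F' x\<bar> \<le> C" if "x \<in> space (PiM S (\<lambda>_. N) \<Otimes>\<^sub>M PiM {t} (\<lambda>_. N))" for x
    unfolding F'_def using that by (intro bnd) (auto simp: space_pair_measure space_PiM)
  have "(\<integral>\<omega>. F' (restrict (\<lambda>i. W i \<omega>) S, restrict (\<lambda>i. W i \<omega>) {t}) \<partial>M) =
         (\<integral>\<omega>. (\<integral>\<omega>'. F' (restrict (\<lambda>i. W i \<omega>) S, restrict (\<lambda>i. W i \<omega>') {t}) \<partial>M) \<partial>M)"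
    by (rule indep_fubini[OF M iv F'm F'b])
  then show ?thesis unfolding F'_def by simp
qed

lemma sprod_meas1[measurable]:
  assumes [measurable]: "f \<in> measurable K (lebesgue_p p \<Otimes>\<^sub>M lebesgue_p q)"
  shows "(\<lambda>\<omega>. sprod p q x (f \<omega>)) \<in> borel_measurable K"
  unfolding sprod_def euc_inner_def by measurable

lemma int_bnd_sum:
  fixes f :: "'i \<Rightarrow> 'a \<Rightarrow> real"
  assumes "prob_space M" "finite J" "\<And>j. j \<in> J \<Longrightarrow> f j \<in> borel_measurable M"
    "\<And>j \<omega>. j \<in> J \<Longrightarrow> \<omega> \<in> space M \<Longrightarrow> \<bar>f j \<omega>\<bar> \<le> C"
  shows "(\<integral>\<omega>. (\<Sum>j\<in>J. f j \<omega>) \<partial>M) = (\<Sum>j\<in>J. (\<integral>\<omega>. f j \<omega> \<partial>M))"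
  by (rule Bochner_Integration.integral_sum) (rule bnd_int[OF assms(1)], auto intro: assms)

lemma condexp_vimage:
  fixes f :: "'a \<Rightarrow> real" and H :: "'b \<Rightarrow> real"
  assumes M: "prob_space M" and G[measurable]: "G \<in> measurable M K"
   and f[measurable]: "f \<in> borel_measurable M" and fb: "\<And>\<omega>. \<omega> \<in> space M \<Longrightarrow> \<bar>f \<omega>\<bar> \<le> C"
   and H[measurable]: "H \<in> borel_measurable K" and Hb: "\<And>x. x \<in> space K \<Longrightarrow> \<bar>H x\<bar> \<le> C'"
   and eq: "\<And>B. B \<in> sets K \<Longrightarrow> (\<integral>\<omega>. indicator B (G \<omega>) * f \<omega> \<partial>M) = (\<integral>\<omega>. indicator B (G \<omega>) * H (G \<omega>) \<partial>M)"
  shows "AE \<omega> in M. real_cond_exp M (vimage_algebra (space M) G K) f \<omega> = H (G \<omega>)"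
proof -
  interpret prob_space M by fact
  have sub: "subalgebra M (vimage_algebra (space M) G K)"
    unfolding subalgebra_def using sets_image_in_sets[OF refl G] by simp
  interpret finite_measure_subalgebra M "vimage_algebra (space M) G K"
    by unfold_locales (rule sub)
  have Gs: "G \<in> space M \<rightarrow> space K" using measurable_space[OF G] by auto
  show ?thesis
  proof (rule real_cond_exp_charact)
    fix A assume "A \<in> sets (vimage_algebra (space M) G K)"
    then obtain B where B: "B \<in> sets K" and A: "A = G -` B \<inter> space M"
      using sets_vimage_algebra2[OF Gs] by auto
    have "(\<integral>x\<in>A. f x \<partial>M) = (\<integral>\<omega>. indicator B (G \<omega>) * f \<omega> \<partial>M)"
      unfolding set_lebesgue_integral_def A
      by (rule Bochner_Integration.integral_cong) (auto simp: indicator_def)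
    also have "\<dots> = (\<integral>\<omega>. indicator B (G \<omega>) * H (G \<omega>) \<partial>M)" by (rule eq[OF B])
    also have "\<dots> = (\<integral>x\<in>A. H (G x) \<partial>M)"
      unfolding set_lebesgue_integral_def A
      by (rule Bochner_Integration.integral_cong) (auto simp: indicator_def)
    finally show "(\<integral>x\<in>A. f x \<partial>M) = (\<integral>x\<in>A. H (G x) \<partial>M)" .
  next
    show "integrable M f" by (rule bnd_int[OF M f fb])
    show "integrable M (\<lambda>x. H (G x))"
      by (rule bnd_int[OF M, where C=C']) (auto intro!: Hb measurable_space[OF G])
    show "(\<lambda>x. H (G x)) \<in> borel_measurable (vimage_algebra (space M) G K)"
      using measurable_comp[OF measurable_vimage_algebra1[OF Gs] H] by (simp add: comp_def)
  qed
qed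

lemma sph_AE_norm:
  assumes sph: "spherical_directions M p X"
  shows "AE \<omega> in M. euc_norm p (X \<omega>) \<noteq> 0"
proof -
  have X[measurable]: "X \<in> measurable M (lebesgue_p p)"
    and N0: "emeasure M {\<omega> \<in> space M. euc_norm p (X \<omega>) = 0} = 0"
    using sph unfolding spherical_directions_def by auto
  have Ns: "{\<omega> \<in> space M. euc_norm p (X \<omega>) = 0} \<in> sets M" by measurable
  show ?thesis by (subst AE_iff_measurable[OF Ns]) (use N0 in auto)
qed

lemma meas_sum_comp:
  assumes A: "\<And>i. i \<in> A \<Longrightarrow> i \<in> S" and [measurable]: "f \<in> measurable K (PiM S (\<lambda>_. lebesgue_p p \<Otimes>\<^sub>M lebesgue_p q))"
    and [measurable]: "g \<in> measurable K (lebesgue_p p \<Otimes>\<^sub>M lebesgue_p q)"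
  shows "(\<lambda>x. \<Sum>i\<in>A. sprod p q (f x i) (g x)) \<in> borel_measurable K"
proof (rule borel_measurable_sum)
  fix i assume "i \<in> A"
  then have i: "i \<in> S" by (rule A)
  have [measurable]: "(\<lambda>x. f x i) \<in> measurable K (lebesgue_p p \<Otimes>\<^sub>M lebesgue_p q)"
    using measurable_comp[OF assms(2) measurable_component_singleton[OF i]] by (simp add: comp_def)
  show "(\<lambda>x. sprod p q (f x i) (g x)) \<in> borel_measurable K" by measurable
qed

lemma sum_abs_bound:
  fixes f :: "'i \<Rightarrow> real"
  assumes "\<And>i. i \<in> A \<Longrightarrow> \<bar>f i\<bar> \<le> c" "real (card A) \<le> m" "c \<ge> 0"
  shows "\<bar>\<Sum>i\<in>A. f i\<bar> \<le> m * c"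
proof -
  have "\<bar>\<Sum>i\<in>A. f i\<bar> \<le> (\<Sum>i\<in>A. \<bar>f i\<bar>)" by (rule sum_abs)
  also have "\<dots> \<le> (\<Sum>i\<in>A. c)" using assms(1) by (rule sum_mono)
  also have "\<dots> = real (card A) * c" by simp
  also have "\<dots> \<le> m * c" using assms(2,3) by (rule mult_right_mono)
  finally show ?thesis .
qed

lemma sq_sum_le: "((a::real) + b)\<^sup>2 \<le> 2 * a\<^sup>2 + 2 * b\<^sup>2"
proof -
  have "2 * a\<^sup>2 + 2 * b\<^sup>2 - (a + b)\<^sup>2 = (a - b)\<^sup>2" by (simp add: power2_eq_square algebra_simps)
  moreover have "0 \<le> (a - b)\<^sup>2" by simp
  ultimately show ?thesis by linarith
qed

lemma comb1:
  fixes s :: "nat \<Rightarrow> nat \<Rightarrow> real"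
  assumes sym: "\<And>i j. s i j = s j i" and diag: "\<And>i. i \<in> {1..<m} \<Longrightarrow> s i i = 1"
  shows "(\<Sum>i\<in>{1..<m}. \<Sum>j\<in>{1..<m}. s i j) = real (m - 1) + 2 * (\<Sum>j\<in>{1..<m}. \<Sum>i\<in>{1..<j}. s i j)"
  using diag
proof (induction m)
  case 0 then show ?case by simp
next
  case (Suc m)
  show ?case
  proof (cases "m = 0")
    case True then show ?thesis by simp
  next
    case False
    have A: "{1..<Suc m} = insert m {1..<m}" using False by auto
    have IH: "(\<Sum>i\<in>{1..<m}. \<Sum>j\<in>{1..<m}. s i j) = real (m - 1) + 2 * (\<Sum>j\<in>{1..<m}. \<Sum>i\<in>{1..<j}. s i j)"
      using Suc.IH Suc.prems by auto
    have smm: "s m m = 1" using Suc.prems False by auto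
    have "(\<Sum>i\<in>{1..<Suc m}. \<Sum>j\<in>{1..<Suc m}. s i j) =
        s m m + (\<Sum>j\<in>{1..<m}. s m j) + (\<Sum>i\<in>{1..<m}. s i m) + (\<Sum>i\<in>{1..<m}. \<Sum>j\<in>{1..<m}. s i j)"
      unfolding A by (simp add: sum.distrib)
    also have "(\<Sum>j\<in>{1..<m}. s m j) = (\<Sum>i\<in>{1..<m}. s i m)" using sym by simp
    finally show ?thesis unfolding A IH smm using False by simp
  qed
qed

lemma comb2:
  fixes f :: "nat \<Rightarrow> real"
  shows "(\<Sum>l\<in>{1..n}. \<Sum>j\<in>{1..<l}. f j) = (\<Sum>j\<in>{1..n}. real (n - j) * f j)"
proof (induction n)
  case 0 then show ?case by simp
next
  case (Suc n)
  have "(\<Sum>l\<in>{1..Suc n}. \<Sum>j\<in>{1..<l}. f j) = (\<Sum>l\<in>{1..n}. \<Sum>j\<in>{1..<l}. f j) + (\<Sum>j\<in>{1..n}. f j)"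
    by (simp add: atLeastLessThanSuc_atLeastAtMost)
  also have "\<dots> = (\<Sum>j\<in>{1..n}. real (Suc n - j) * f j)"
    unfolding Suc.IH sum.distrib[symmetric]
    by (intro sum.cong refl) (auto simp: Suc_diff_le of_nat_Suc algebra_simps)
  also have "\<dots> = (\<Sum>j\<in>{1..Suc n}. real (Suc n - j) * f j)"
    by simp
  finally show ?case .
qed

lemma comb3: "(\<Sum>l\<in>{1..n}. real (l - 1)) = real n * (real n - 1) / 2"
proof (induction n)
  case 0 then show ?case by simp
next
  case (Suc n) then show ?case by (simp add: field_simps)
qed

locale fixn =
  fixes M :: "'a measure" and p q n :: nat and X Y :: "nat \<Rightarrow> 'a \<Rightarrow> nat \<Rightarrow> real"
  assumes M: "prob_space M" and p: "p > 0" and q: "q > 0"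
    and meas: "\<And>i. i \<in> {1..n} \<Longrightarrow> (\<lambda>\<omega>. (X i \<omega>, Y i \<omega>)) \<in> measurable M (lebesgue_p p \<Otimes>\<^sub>M lebesgue_p q)"
    and indep: "prob_space.indep_vars M (\<lambda>_. lebesgue_p p \<Otimes>\<^sub>M lebesgue_p q) (\<lambda>i \<omega>. (X i \<omega>, Y i \<omega>)) {1..n}"
    and XYi: "\<And>i. i \<in> {1..n} \<Longrightarrow> prob_space.indep_var M (lebesgue_p p) (X i) (lebesgue_p q) (Y i)"
    and sX: "\<And>i. i \<in> {1..n} \<Longrightarrow> spherical_directions M p (X i)"
    and sY: "\<And>i. i \<in> {1..n} \<Longrightarrow> spherical_directions M q (Y i)"
begin

interpretation prob_space M by (rule M)

definition W where "W i \<omega> = (X i \<omega>, Y i \<omega>)"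

lemma Wm[measurable]: "i \<in> {1..n} \<Longrightarrow> W i \<in> measurable M (lebesgue_p p \<Otimes>\<^sub>M lebesgue_p q)"
  unfolding W_def[abs_def] by (rule meas)

lemma indepW: "indep_vars (\<lambda>_. lebesgue_p p \<Otimes>\<^sub>M lebesgue_p q) W {1..n}"
  using indep unfolding W_def[abs_def] .

lemma inner_lin: "t \<in> {1..n} \<Longrightarrow> (\<integral>\<omega>. sprod p q x (W t \<omega>) \<partial>M) = 0"
  unfolding W_def by (rule pair_lin[OF M sX sY XYi])

lemma inner_quad: "t \<in> {1..n} \<Longrightarrow>
   (\<integral>\<omega>. sprod p q x1 (W t \<omega>) * sprod p q x2 (W t \<omega>) \<partial>M) = sprod p q x1 x2 / (real p * real q)"
  unfolding W_def by (rule pair_quad[OF M sX sY XYi])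

lemma inner_sq:
  assumes t: "t \<in> {1..n}" and J: "finite J"
  shows "(\<integral>\<omega>. (\<Sum>i\<in>J. sprod p q (g i) (W t \<omega>))\<^sup>2 \<partial>M) =
    (\<Sum>i\<in>J. \<Sum>j\<in>J. sprod p q (g i) (g j)) / (real p * real q)"
proof -
  have "(\<integral>\<omega>. (\<Sum>i\<in>J. sprod p q (g i) (W t \<omega>))\<^sup>2 \<partial>M) =
      (\<integral>\<omega>. (\<Sum>i\<in>J. \<Sum>j\<in>J. sprod p q (g i) (W t \<omega>) * sprod p q (g j) (W t \<omega>)) \<partial>M)"
    by (simp add: power2_eq_square sum_product)
  also have "\<dots> = (\<Sum>i\<in>J. (\<integral>\<omega>. (\<Sum>j\<in>J. sprod p q (g i) (W t \<omega>) * sprod p q (g j) (W t \<omega>)) \<partial>M))"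
  proof (rule int_bnd_sum[OF M J, where C="real (card J) * ((real p * real q) * (real p * real q))"])
    fix i \<omega>
    have "\<bar>\<Sum>j\<in>J. sprod p q (g i) (W t \<omega>) * sprod p q (g j) (W t \<omega>)\<bar> \<le> (\<Sum>j\<in>J. \<bar>sprod p q (g i) (W t \<omega>) * sprod p q (g j) (W t \<omega>)\<bar>)"
      by (rule sum_abs)
    also have "\<dots> \<le> (\<Sum>j\<in>J. (real p * real q) * (real p * real q))"
      unfolding abs_mult by (intro sum_mono mult_mono sprod_bound) auto
    finally show "\<bar>\<Sum>j\<in>J. sprod p q (g i) (W t \<omega>) * sprod p q (g j) (W t \<omega>)\<bar> \<le> real (card J) * ((real p * real q) * (real p * real q))"
      by simp
  qed (use t in measurable)
  also have "\<dots> = (\<Sum>i\<in>J. \<Sum>j\<in>J. (\<integral>\<omega>. sprod p q (g i) (W t \<omega>) * sprod p q (g j) (W t \<omega>) \<partial>M))"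
  proof (rule sum.cong[OF refl], rule int_bnd_sum[OF M J, where C="(real p * real q) * (real p * real q)"])
    fix i j \<omega>
    show "\<bar>sprod p q (g i) (W t \<omega>) * sprod p q (g j) (W t \<omega>)\<bar> \<le> (real p * real q) * (real p * real q)"
      unfolding abs_mult by (intro mult_mono sprod_bound) auto
  qed (use t in measurable)
  also have "\<dots> = (\<Sum>i\<in>J. \<Sum>j\<in>J. sprod p q (g i) (g j) / (real p * real q))"
    using inner_quad[OF t] by simp
  also have "\<dots> = (\<Sum>i\<in>J. \<Sum>j\<in>J. sprod p q (g i) (g j)) / (real p * real q)"
    by (simp add: sum_divide_distrib)
  finally show ?thesis .
qed

lemma W_space: "i \<in> {1..n} \<Longrightarrow> \<omega> \<in> space M \<Longrightarrow> W i \<omega> \<in> space (lebesgue_p p \<Otimes>\<^sub>M lebesgue_p q)"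
  using measurable_space[OF Wm] by blast

lemma DI_eq: "DI n p q X Y l \<omega> = sqrt (2 * real p * real q) / real n * (\<Sum>i\<in>{1..<l}. sprod p q (W i \<omega>) (W l \<omega>))"
  unfolding DI_def sprod_def W_def by simp

lemma condexp_DI:
  assumes l: "l \<in> {1..n}"
  shows "AE \<omega> in M. real_cond_exp M (past_algebra M p q X Y (l - 1)) (\<lambda>\<omega>'. (DI n p q X Y l \<omega>')\<^sup>2) \<omega> =
     2 / (real n)\<^sup>2 * (\<Sum>i\<in>{1..<l}. \<Sum>j\<in>{1..<l}. sprod p q (W i \<omega>) (W j \<omega>))"
proof -
  define J where "J = {1..<l}"
  define K where "K = PiM J (\<lambda>_. lebesgue_p p \<Otimes>\<^sub>M lebesgue_p q)"
  define G where "G \<omega> = restrict (\<lambda>i. W i \<omega>) J" for \<omega>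
  define k where "k = sqrt (2 * real p * real q) / real n"
  define H where "H g = 2 / (real n)\<^sup>2 * (\<Sum>i\<in>J. \<Sum>j\<in>J. sprod p q (g i) (g j))" for g :: "nat \<Rightarrow> (nat \<Rightarrow> real) \<times> (nat \<Rightarrow> real)"
  have J1: "{1..l - 1} = J" unfolding J_def by auto
  have JI: "J \<subseteq> {1..n}" "l \<notin> J" "finite J" using l by (auto simp: J_def)
  have cardJ: "real (card J) \<le> real n" using l by (simp add: J_def)
  have past: "past_algebra M p q X Y (l - 1) = vimage_algebra (space M) G K"
    unfolding past_algebra_def J1 K_def G_def W_def ..
  have Gm[measurable]: "G \<in> measurable M K"
    unfolding G_def K_def by (rule measurable_restrict) (use JI in auto)
  have GW: "G \<omega> i = W i \<omega>" if "i \<in> J" for \<omega> i using that by (simp add: G_def)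
  have k2: "k\<^sup>2 = 2 * real p * real q / (real n)\<^sup>2"
    unfolding k_def by (simp add: power_divide)
  have sumb: "\<bar>\<Sum>i\<in>J. sprod p q (g i) z\<bar> \<le> real n * (real p * real q)" for g z
  proof -
    have "\<bar>\<Sum>i\<in>J. sprod p q (g i) z\<bar> \<le> (\<Sum>i\<in>J. \<bar>sprod p q (g i) z\<bar>)" by (rule sum_abs)
    also have "\<dots> \<le> (\<Sum>i\<in>J. real p * real q)" by (intro sum_mono sprod_bound)
    also have "\<dots> \<le> real n * (real p * real q)" using cardJ by (simp add: mult_right_mono)
    finally show ?thesis .
  qed
  have sumb2: "\<bar>\<Sum>i\<in>J. \<Sum>j\<in>J. sprod p q (g i) (g j)\<bar> \<le> real n * (real n * (real p * real q))" for g
  proof -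
    have "\<bar>\<Sum>i\<in>J. \<Sum>j\<in>J. sprod p q (g i) (g j)\<bar> \<le> (\<Sum>i\<in>J. \<bar>\<Sum>j\<in>J. sprod p q (g i) (g j)\<bar>)" by (rule sum_abs)
    also have "\<dots> \<le> (\<Sum>i\<in>J. real n * (real p * real q))"
    proof (rule sum_mono)
      fix i
      have "\<bar>\<Sum>j\<in>J. sprod p q (g i) (g j)\<bar> \<le> (\<Sum>j\<in>J. \<bar>sprod p q (g i) (g j)\<bar>)" by (rule sum_abs)
      also have "\<dots> \<le> (\<Sum>j\<in>J. real p * real q)" by (intro sum_mono sprod_bound)
      also have "\<dots> \<le> real n * (real p * real q)" using cardJ by (simp add: mult_right_mono)
      finally show "\<bar>\<Sum>j\<in>J. sprod p q (g i) (g j)\<bar> \<le> real n * (real p * real q)" .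
    qed
    also have "\<dots> \<le> real n * (real n * (real p * real q))" using cardJ by (simp add: mult_right_mono)
    finally show ?thesis .
  qed
  define CF where "CF = (\<bar>k\<bar> * (real n * (real p * real q)))\<^sup>2"
  have sqb: "(k * (\<Sum>i\<in>J. sprod p q (g i) z))\<^sup>2 \<le> CF" for g z
  proof -
    have "\<bar>k * (\<Sum>i\<in>J. sprod p q (g i) z)\<bar> \<le> \<bar>k\<bar> * (real n * (real p * real q))"
      unfolding abs_mult by (intro mult_left_mono sumb) auto
    then have "\<bar>k * (\<Sum>i\<in>J. sprod p q (g i) z)\<bar>\<^sup>2 \<le> (\<bar>k\<bar> * (real n * (real p * real q)))\<^sup>2"
      by (rule power_mono) simp
    then show ?thesis unfolding CF_def by simp
  qed
  have fDI: "(DI n p q X Y l \<omega>)\<^sup>2 = (k * (\<Sum>i\<in>J. sprod p q (G \<omega> i) (W l \<omega>)))\<^sup>2" for \<omega>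
    unfolding DI_eq k_def J_def[symmetric] using GW by simp
  have "AE \<omega> in M. real_cond_exp M (vimage_algebra (space M) G K) (\<lambda>\<omega>'. (DI n p q X Y l \<omega>')\<^sup>2) \<omega> = H (G \<omega>)"
  proof (rule condexp_vimage[OF M Gm, where C=CF and C'="2 / (real n)\<^sup>2 * (real n * (real n * (real p * real q)))"])
    have sm[measurable]: "(\<lambda>\<omega>. \<Sum>i\<in>J. sprod p q (W i \<omega>) (W l \<omega>)) \<in> borel_measurable M"
    proof (rule borel_measurable_sum)
      fix i assume "i \<in> J" then have "i \<in> {1..n}" using JI by auto
      then show "(\<lambda>\<omega>. sprod p q (W i \<omega>) (W l \<omega>)) \<in> borel_measurable M" using l by measurable
    qed
    show "(\<lambda>\<omega>'. (DI n p q X Y l \<omega>')\<^sup>2) \<in> borel_measurable M"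
      unfolding DI_eq J_def[symmetric] by measurable
    show "\<bar>(DI n p q X Y l \<omega>)\<^sup>2\<bar> \<le> CF" for \<omega> unfolding fDI using sqb by simp
    show "H \<in> borel_measurable K" unfolding H_def K_def by measurable
    show "\<bar>H x\<bar> \<le> 2 / (real n)\<^sup>2 * (real n * (real n * (real p * real q)))" for x
    proof -
      have "\<bar>2 / (real n)\<^sup>2\<bar> = 2 / (real n)\<^sup>2" by simp
      then show ?thesis unfolding H_def abs_mult by (metis mult_left_mono sumb2 zero_le_divide_iff zero_le_numeral zero_le_power2)
    qed
  next
    fix B assume B[measurable]: "B \<in> sets K"
    define F where "F x = indicator B (fst x) * (k * (\<Sum>i\<in>J. sprod p q (fst x i) (snd x)))\<^sup>2"
      for x :: "(nat \<Rightarrow> (nat \<Rightarrow> real) \<times> (nat \<Rightarrow> real)) \<times> (nat \<Rightarrow> real) \<times> (nat \<Rightarrow> real)"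
    have Fm: "F \<in> borel_measurable (PiM J (\<lambda>_. lebesgue_p p \<Otimes>\<^sub>M lebesgue_p q) \<Otimes>\<^sub>M (lebesgue_p p \<Otimes>\<^sub>M lebesgue_p q))"
      using B unfolding F_def K_def by measurable
    have Fb: "\<bar>F x\<bar> \<le> CF" for x
    proof -
      have "\<bar>F x\<bar> \<le> 1 * CF" unfolding F_def abs_mult
        using sqb by (intro mult_mono) (auto simp: indicator_def)
      then show ?thesis by simp
    qed
    have "(\<integral>\<omega>. indicator B (G \<omega>) * (DI n p q X Y l \<omega>)\<^sup>2 \<partial>M) = (\<integral>\<omega>. F (G \<omega>, W l \<omega>) \<partial>M)"
      unfolding F_def fDI by simp
    also have "\<dots> = (\<integral>\<omega>. (\<integral>\<omega>'. F (G \<omega>, W l \<omega>') \<partial>M) \<partial>M)"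
      unfolding G_def by (rule indep_split[OF M indepW l JI(1,2) Fm Fb])
    also have "\<dots> = (\<integral>\<omega>. indicator B (G \<omega>) * H (G \<omega>) \<partial>M)"
    proof (rule Bochner_Integration.integral_cong[OF refl])
      fix \<omega> assume \<omega>: "\<omega> \<in> space M"
      have "(\<integral>\<omega>'. F (G \<omega>, W l \<omega>') \<partial>M) =
         indicator B (G \<omega>) * k\<^sup>2 * (\<integral>\<omega>'. (\<Sum>i\<in>J. sprod p q (G \<omega> i) (W l \<omega>'))\<^sup>2 \<partial>M)"
        unfolding F_def by (simp add: power_mult_distrib mult.assoc)
      also have "\<dots> = indicator B (G \<omega>) * k\<^sup>2 * ((\<Sum>i\<in>J. \<Sum>j\<in>J. sprod p q (G \<omega> i) (G \<omega> j)) / (real p * real q))"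
        by (simp add: inner_sq[OF l JI(3)])
      also have "\<dots> = indicator B (G \<omega>) * H (G \<omega>)"
        unfolding k2 H_def using p q by (simp add: field_simps)
      finally show "(\<integral>\<omega>'. F (G \<omega>, W l \<omega>') \<partial>M) = indicator B (G \<omega>) * H (G \<omega>)" .
    qed
    finally show "(\<integral>\<omega>. indicator B (G \<omega>) * (DI n p q X Y l \<omega>)\<^sup>2 \<partial>M) = (\<integral>\<omega>. indicator B (G \<omega>) * H (G \<omega>) \<partial>M)" .
  qed
  moreover have "H (G \<omega>) = 2 / (real n)\<^sup>2 * (\<Sum>i\<in>{1..<l}. \<Sum>j\<in>{1..<l}. sprod p q (W i \<omega>) (W j \<omega>))" for \<omega>
    unfolding H_def J_def[symmetric] using GW by simp
  ultimately show ?thesis unfolding past by simp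
qed

lemma Sii: "AE \<omega> in M. \<forall>i\<in>{1..n}. sprod p q (W i \<omega>) (W i \<omega>) = 1"
proof (rule AE_finite_allI)
  fix i assume i: "i \<in> {1..n}"
  have "AE \<omega> in M. euc_norm p (X i \<omega>) \<noteq> 0" by (rule sph_AE_norm[OF sX[OF i]])
  moreover have "AE \<omega> in M. euc_norm q (Y i \<omega>) \<noteq> 0" by (rule sph_AE_norm[OF sY[OF i]])
  ultimately show "AE \<omega> in M. sprod p q (W i \<omega>) (W i \<omega>) = 1"
  proof eventually_elim
    case (elim \<omega>)
    then show ?case unfolding sprod_def W_def euc_inner_def
      using sd_sumsq[of p "X i \<omega>"] sd_sumsq[of q "Y i \<omega>"] by (simp add: power2_eq_square)
  qed
qed simp

lemma Esii: "i \<in> {1..n} \<Longrightarrow> (\<integral>\<omega>. sprod p q (W i \<omega>) (W i \<omega>) \<partial>M) = 1"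
proof -
  assume i: "i \<in> {1..n}"
  have "(\<integral>\<omega>. sprod p q (W i \<omega>) (W i \<omega>) \<partial>M) = (\<integral>\<omega>. 1 \<partial>M)"
    using Sii i by (intro integral_cong_AE) (auto elim!: eventually_mono)
  also have "\<dots> = 1" using lebesgue_integral_const[of M "1::real"] prob_space by simp
  finally show ?thesis .
qed

lemma Orth1:
  assumes i: "i \<in> {1..n}" and j: "j \<in> {1..n}" and ij: "i \<noteq> j"
  shows "(\<integral>\<omega>. sprod p q (W i \<omega>) (W j \<omega>) \<partial>M) = 0"
proof -
  define S where "S = {1..n} - {j}"
  have iS: "i \<in> S" using i ij by (simp add: S_def)
  define F where "F x = sprod p q (fst x i) (snd x)" for x :: "(nat \<Rightarrow> (nat \<Rightarrow> real) \<times> (nat \<Rightarrow> real)) \<times> (nat \<Rightarrow> real) \<times> (nat \<Rightarrow> real)"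
  have Fm: "F \<in> borel_measurable (PiM S (\<lambda>_. lebesgue_p p \<Otimes>\<^sub>M lebesgue_p q) \<Otimes>\<^sub>M (lebesgue_p p \<Otimes>\<^sub>M lebesgue_p q))"
    using meas_sum_comp[of "{i}" S fst _ p q snd] iS unfolding F_def by simp
  have "(\<integral>\<omega>. sprod p q (W i \<omega>) (W j \<omega>) \<partial>M) = (\<integral>\<omega>. F (restrict (\<lambda>k. W k \<omega>) S, W j \<omega>) \<partial>M)"
    unfolding F_def using iS by simp
  also have "\<dots> = (\<integral>\<omega>. (\<integral>\<omega>'. F (restrict (\<lambda>k. W k \<omega>) S, W j \<omega>') \<partial>M) \<partial>M)"
    by (rule indep_split[OF M indepW j _ _ Fm, where C="real p * real q"]) (auto simp: S_def F_def sprod_bound)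
  also have "\<dots> = (\<integral>\<omega>. 0 \<partial>M)"
    unfolding F_def using inner_lin[OF j] by simp
  finally show ?thesis by simp
qed

definition R where "R j \<omega> = (\<Sum>i\<in>{1..<j}. sprod p q (W i \<omega>) (W j \<omega>))"

lemma R_bound: "j \<le> n \<Longrightarrow> \<bar>R j \<omega>\<bar> \<le> real n * (real p * real q)"
  unfolding R_def by (rule sum_abs_bound) (auto intro: sprod_bound)

lemma R_meas[measurable]:
  assumes j: "j \<in> {1..n}" shows "R j \<in> borel_measurable M"
proof -
  have m: "(\<lambda>\<omega>. restrict (\<lambda>i. W i \<omega>) {1..n}) \<in> measurable M (PiM {1..n} (\<lambda>_. lebesgue_p p \<Otimes>\<^sub>M lebesgue_p q))"
    by (rule measurable_restrict) simp
  have "(\<lambda>\<omega>. \<Sum>i\<in>{1..<j}. sprod p q (restrict (\<lambda>i. W i \<omega>) {1..n} i) (W j \<omega>)) \<in> borel_measurable M"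
    by (rule meas_sum_comp[OF _ m]) (use j in auto)
  moreover have "(\<lambda>\<omega>. \<Sum>i\<in>{1..<j}. sprod p q (restrict (\<lambda>i. W i \<omega>) {1..n} i) (W j \<omega>)) = R j"
    unfolding R_def using j by (intro ext sum.cong) auto
  ultimately show ?thesis by simp
qed

lemma s_meas[measurable]: "i \<in> {1..n} \<Longrightarrow> j \<in> {1..n} \<Longrightarrow> (\<lambda>\<omega>. sprod p q (W i \<omega>) (W j \<omega>)) \<in> borel_measurable M"
  by measurable

lemma Es: "i \<in> {1..n} \<Longrightarrow> j \<in> {1..n} \<Longrightarrow> (\<integral>\<omega>. sprod p q (W i \<omega>) (W j \<omega>) \<partial>M) = (if i = j then 1 else 0)"
  using Esii Orth1 by auto

lemma RR_diag:
  assumes j: "j \<in> {1..n}"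
  shows "(\<integral>\<omega>. (R j \<omega>)\<^sup>2 \<partial>M) = real (j - 1) / (real p * real q)"
proof -
  define S where "S = {1..n} - {j}"
  define J where "J = {1..<j}"
  have JS: "J \<subseteq> S" "J \<subseteq> {1..n}" "finite J" using j by (auto simp: S_def J_def)
  define F where "F x = (\<Sum>i\<in>J. sprod p q (fst x i) (snd x))\<^sup>2" for x :: "(nat \<Rightarrow> (nat \<Rightarrow> real) \<times> (nat \<Rightarrow> real)) \<times> (nat \<Rightarrow> real) \<times> (nat \<Rightarrow> real)"
  have Fm: "F \<in> borel_measurable (PiM S (\<lambda>_. lebesgue_p p \<Otimes>\<^sub>M lebesgue_p q) \<Otimes>\<^sub>M (lebesgue_p p \<Otimes>\<^sub>M lebesgue_p q))"
  proof -
    have "(\<lambda>x. \<Sum>i\<in>J. sprod p q (fst x i) (snd x)) \<in> borel_measurable (PiM S (\<lambda>_. lebesgue_p p \<Otimes>\<^sub>M lebesgue_p q) \<Otimes>\<^sub>M (lebesgue_p p \<Otimes>\<^sub>M lebesgue_p q))"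
      by (rule meas_sum_comp[where S=S]) (use JS in auto)
    then show ?thesis unfolding F_def by measurable
  qed
  have sb: "\<bar>\<Sum>i\<in>J. sprod p q (g i) z\<bar> \<le> real n * (real p * real q)" for g z
    by (rule sum_abs_bound) (use j in \<open>auto simp: J_def intro: sprod_bound\<close>)
  have Fb: "\<bar>F x\<bar> \<le> (real n * (real p * real q))\<^sup>2" for x
  proof -
    have "\<bar>\<Sum>i\<in>J. sprod p q (fst x i) (snd x)\<bar>\<^sup>2 \<le> (real n * (real p * real q))\<^sup>2"
      by (rule power_mono[OF sb]) simp
    then show ?thesis unfolding F_def by simp
  qed
  have "(\<integral>\<omega>. (R j \<omega>)\<^sup>2 \<partial>M) = (\<integral>\<omega>. F (restrict (\<lambda>k. W k \<omega>) S, W j \<omega>) \<partial>M)"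
    unfolding F_def R_def J_def[symmetric] using JS by (intro Bochner_Integration.integral_cong refl arg_cong[where f="\<lambda>x. x\<^sup>2"] sum.cong) auto
  also have "\<dots> = (\<integral>\<omega>. (\<integral>\<omega>'. F (restrict (\<lambda>k. W k \<omega>) S, W j \<omega>') \<partial>M) \<partial>M)"
    by (rule indep_split[OF M indepW j _ _ Fm Fb]) (auto simp: S_def)
  also have "\<dots> = (\<integral>\<omega>. (\<Sum>i\<in>J. \<Sum>i'\<in>J. sprod p q (W i \<omega>) (W i' \<omega>)) / (real p * real q) \<partial>M)"
  proof (rule Bochner_Integration.integral_cong[OF refl])
    fix \<omega>
    have "(\<integral>\<omega>'. F (restrict (\<lambda>k. W k \<omega>) S, W j \<omega>') \<partial>M) =
       (\<Sum>i\<in>J. \<Sum>i'\<in>J. sprod p q (restrict (\<lambda>k. W k \<omega>) S i) (restrict (\<lambda>k. W k \<omega>) S i')) / (real p * real q)"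
      unfolding F_def fst_conv snd_conv by (rule inner_sq[OF j JS(3)])
    also have "\<dots> = (\<Sum>i\<in>J. \<Sum>i'\<in>J. sprod p q (W i \<omega>) (W i' \<omega>)) / (real p * real q)"
      using JS by (intro arg_cong[where f="\<lambda>x. x / _"] sum.cong refl) auto
    finally show "(\<integral>\<omega>'. F (restrict (\<lambda>k. W k \<omega>) S, W j \<omega>') \<partial>M) = (\<Sum>i\<in>J. \<Sum>i'\<in>J. sprod p q (W i \<omega>) (W i' \<omega>)) / (real p * real q)" .
  qed
  also have "\<dots> = (\<integral>\<omega>. (\<Sum>i\<in>J. \<Sum>i'\<in>J. sprod p q (W i \<omega>) (W i' \<omega>)) \<partial>M) / (real p * real q)"
    by simp
  also have "(\<integral>\<omega>. (\<Sum>i\<in>J. \<Sum>i'\<in>J. sprod p q (W i \<omega>) (W i' \<omega>)) \<partial>M) = (\<Sum>i\<in>J. \<Sum>i'\<in>J. (\<integral>\<omega>. sprod p q (W i \<omega>) (W i' \<omega>) \<partial>M))"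
  proof -
    have "(\<integral>\<omega>. (\<Sum>i\<in>J. \<Sum>i'\<in>J. sprod p q (W i \<omega>) (W i' \<omega>)) \<partial>M) = (\<Sum>i\<in>J. (\<integral>\<omega>. (\<Sum>i'\<in>J. sprod p q (W i \<omega>) (W i' \<omega>)) \<partial>M))"
    proof (rule int_bnd_sum[OF M JS(3), where C="real n * (real p * real q)"])
      fix i assume "i \<in> J"
      then show "(\<lambda>\<omega>. \<Sum>i'\<in>J. sprod p q (W i \<omega>) (W i' \<omega>)) \<in> borel_measurable M"
        using JS by (intro borel_measurable_sum s_meas) auto
      show "\<bar>\<Sum>i'\<in>J. sprod p q (W i \<omega>) (W i' \<omega>)\<bar> \<le> real n * (real p * real q)" for \<omega>
        by (rule sum_abs_bound) (use j in \<open>auto simp: J_def intro: sprod_bound\<close>)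
    qed
    also have "\<dots> = (\<Sum>i\<in>J. \<Sum>i'\<in>J. (\<integral>\<omega>. sprod p q (W i \<omega>) (W i' \<omega>) \<partial>M))"
    proof (rule sum.cong[OF refl], rule int_bnd_sum[OF M JS(3), where C="real p * real q"])
      fix i i' assume "i \<in> J" "i' \<in> J"
      then show "(\<lambda>\<omega>. sprod p q (W i \<omega>) (W i' \<omega>)) \<in> borel_measurable M"
        using JS by (intro s_meas) auto
    qed (rule sprod_bound)
    finally show ?thesis .
  qed
  also have "(\<Sum>i\<in>J. \<Sum>i'\<in>J. (\<integral>\<omega>. sprod p q (W i \<omega>) (W i' \<omega>) \<partial>M)) = (\<Sum>i\<in>J. \<Sum>i'\<in>J. (if i = i' then 1 else 0))"
    using JS by (intro sum.cong refl Es) auto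
  also have "\<dots> = real (j - 1)"
    using JS by (simp add: J_def)
  finally show ?thesis .
qed

lemma RR_cross:
  assumes j: "j \<in> {1..n}" and k: "k \<in> {1..n}" and jk: "j < k"
  shows "(\<integral>\<omega>. R j \<omega> * R k \<omega> \<partial>M) = 0"
proof -
  define S where "S = {1..n} - {k}"
  define J where "J = {1..<j}"
  define K where "K = {1..<k}"
  have JS: "J \<subseteq> S" "K \<subseteq> S" "j \<in> S" "finite K" using j k jk by (auto simp: S_def J_def K_def)
  define F where "F x = (\<Sum>i\<in>J. sprod p q (fst x i) (fst x j)) * (\<Sum>i\<in>K. sprod p q (fst x i) (snd x))"
    for x :: "(nat \<Rightarrow> (nat \<Rightarrow> real) \<times> (nat \<Rightarrow> real)) \<times> (nat \<Rightarrow> real) \<times> (nat \<Rightarrow> real)"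
  have Fm: "F \<in> borel_measurable (PiM S (\<lambda>_. lebesgue_p p \<Otimes>\<^sub>M lebesgue_p q) \<Otimes>\<^sub>M (lebesgue_p p \<Otimes>\<^sub>M lebesgue_p q))"
  proof -
    have cj: "(\<lambda>x. fst x j) \<in> measurable (PiM S (\<lambda>_. lebesgue_p p \<Otimes>\<^sub>M lebesgue_p q) \<Otimes>\<^sub>M (lebesgue_p p \<Otimes>\<^sub>M lebesgue_p q)) (lebesgue_p p \<Otimes>\<^sub>M lebesgue_p q)"
      using measurable_comp[OF measurable_fst measurable_component_singleton[OF JS(3)]] by (simp add: comp_def)
    have "(\<lambda>x. \<Sum>i\<in>J. sprod p q (fst x i) (fst x j)) \<in> borel_measurable (PiM S (\<lambda>_. lebesgue_p p \<Otimes>\<^sub>M lebesgue_p q) \<Otimes>\<^sub>M (lebesgue_p p \<Otimes>\<^sub>M lebesgue_p q))"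
      by (rule meas_sum_comp[where S=S, OF _ _ cj]) (use JS in auto)
    moreover have "(\<lambda>x. \<Sum>i\<in>K. sprod p q (fst x i) (snd x)) \<in> borel_measurable (PiM S (\<lambda>_. lebesgue_p p \<Otimes>\<^sub>M lebesgue_p q) \<Otimes>\<^sub>M (lebesgue_p p \<Otimes>\<^sub>M lebesgue_p q))"
      by (rule meas_sum_comp[where S=S]) (use JS in auto)
    ultimately show ?thesis unfolding F_def by measurable
  qed
  have sb1: "\<bar>\<Sum>i\<in>J. sprod p q (g i) z\<bar> \<le> real n * (real p * real q)" for g z
    by (rule sum_abs_bound) (use j in \<open>auto simp: J_def intro: sprod_bound\<close>)
  have sb2: "\<bar>\<Sum>i\<in>K. sprod p q (g i) z\<bar> \<le> real n * (real p * real q)" for g z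
    by (rule sum_abs_bound) (use k in \<open>auto simp: K_def intro: sprod_bound\<close>)
  have Fb: "\<bar>F x\<bar> \<le> (real n * (real p * real q)) * (real n * (real p * real q))" for x
    unfolding F_def abs_mult by (intro mult_mono sb1 sb2) auto
  have "(\<integral>\<omega>. R j \<omega> * R k \<omega> \<partial>M) = (\<integral>\<omega>. F (restrict (\<lambda>k. W k \<omega>) S, W k \<omega>) \<partial>M)"
    unfolding F_def R_def J_def[symmetric] K_def[symmetric] using JS
    by (intro Bochner_Integration.integral_cong refl arg_cong2[where f="(*)"] sum.cong) auto
  also have "\<dots> = (\<integral>\<omega>. (\<integral>\<omega>'. F (restrict (\<lambda>k. W k \<omega>) S, W k \<omega>') \<partial>M) \<partial>M)"
    by (rule indep_split[OF M indepW k _ _ Fm Fb]) (auto simp: S_def)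
  also have "\<dots> = (\<integral>\<omega>. 0 \<partial>M)"
  proof (rule Bochner_Integration.integral_cong[OF refl])
    fix \<omega>
    define g where "g = restrict (\<lambda>k. W k \<omega>) S"
    have "(\<integral>\<omega>'. (\<Sum>i\<in>K. sprod p q (g i) (W k \<omega>')) \<partial>M) = (\<Sum>i\<in>K. (\<integral>\<omega>'. sprod p q (g i) (W k \<omega>') \<partial>M))"
      by (rule int_bnd_sum[OF M JS(4), where C="real p * real q"]) (use k in \<open>auto intro: sprod_bound\<close>)
    also have "\<dots> = 0" using inner_lin[OF k] by simp
    finally have "(\<integral>\<omega>'. (\<Sum>i\<in>K. sprod p q (g i) (W k \<omega>')) \<partial>M) = 0" .
    then show "(\<integral>\<omega>'. F (restrict (\<lambda>k. W k \<omega>) S, W k \<omega>') \<partial>M) = 0"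
      unfolding F_def g_def[symmetric] by simp
  qed
  finally show ?thesis by simp
qed

lemma RR: "j \<in> {1..n} \<Longrightarrow> k \<in> {1..n} \<Longrightarrow>
  (\<integral>\<omega>. R j \<omega> * R k \<omega> \<partial>M) = (if k = j then real (j - 1) / (real p * real q) else 0)"
proof -
  assume j: "j \<in> {1..n}" and k: "k \<in> {1..n}"
  consider "j < k" | "j = k" | "k < j" by linarith
  then show ?thesis
  proof cases
    case 1 then show ?thesis using RR_cross[OF j k] by simp
  next
    case 2 then show ?thesis using RR_diag[OF j] by (simp add: power2_eq_square)
  next
    case 3 then show ?thesis using RR_cross[OF k j] by (simp add: mult.commute)
  qed
qed

definition T where "T \<omega> = (\<Sum>j\<in>{1..n}. real (n - j) * R j \<omega>)"

lemma T_meas[measurable]: "T \<in> borel_measurable M"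
  unfolding T_def[abs_def] by (intro borel_measurable_sum borel_measurable_times) auto

lemma T_bound: "\<bar>T \<omega>\<bar> \<le> real n * (real n * (real n * (real p * real q)))"
  unfolding T_def
proof (rule sum_abs_bound)
  fix j assume "j \<in> {1..n}"
  then show "\<bar>real (n - j) * R j \<omega>\<bar> \<le> real n * (real n * (real p * real q))"
    unfolding abs_mult by (intro mult_mono R_bound) auto
qed auto

lemma T_sq: "(\<integral>\<omega>. (T \<omega>)\<^sup>2 \<partial>M) \<le> (real n)^4 / (real p * real q)"
proof -
  define a where "a j = real (n - j)" for j
  define B where "B = real n * (real p * real q)"
  have Rb: "\<bar>R j \<omega>\<bar> \<le> B" if "j \<in> {1..n}" for j \<omega> unfolding B_def using that by (intro R_bound) auto
  have ab: "\<bar>a j\<bar> \<le> real n" for j unfolding a_def by simp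
  have prodb: "\<bar>a j * a k * (R j \<omega> * R k \<omega>)\<bar> \<le> real n * real n * (B * B)" if "j \<in> {1..n}" "k \<in> {1..n}" for j k \<omega>
    unfolding abs_mult by (intro mult_mono ab Rb that) (auto simp: B_def)
  have "(\<integral>\<omega>. (T \<omega>)\<^sup>2 \<partial>M) = (\<integral>\<omega>. (\<Sum>j\<in>{1..n}. \<Sum>k\<in>{1..n}. a j * a k * (R j \<omega> * R k \<omega>)) \<partial>M)"
    unfolding T_def a_def by (simp add: power2_eq_square sum_product algebra_simps)
  also have "\<dots> = (\<Sum>j\<in>{1..n}. (\<integral>\<omega>. (\<Sum>k\<in>{1..n}. a j * a k * (R j \<omega> * R k \<omega>)) \<partial>M))"
  proof (rule int_bnd_sum[OF M, where C="real n * (real n * real n * (B * B))"])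
    fix j \<omega> assume j: "j \<in> {1..n}"
    show "(\<lambda>\<omega>. \<Sum>k\<in>{1..n}. a j * a k * (R j \<omega> * R k \<omega>)) \<in> borel_measurable M"
      using j by measurable
    show "\<bar>\<Sum>k\<in>{1..n}. a j * a k * (R j \<omega> * R k \<omega>)\<bar> \<le> real n * (real n * real n * (B * B))"
      by (rule sum_abs_bound) (auto intro: prodb[OF j])
  qed simp
  also have "\<dots> = (\<Sum>j\<in>{1..n}. \<Sum>k\<in>{1..n}. a j * a k * (\<integral>\<omega>. R j \<omega> * R k \<omega> \<partial>M))"
  proof (rule sum.cong[OF refl])
    fix j assume j: "j \<in> {1..n}"
    have "(\<integral>\<omega>. (\<Sum>k\<in>{1..n}. a j * a k * (R j \<omega> * R k \<omega>)) \<partial>M) = (\<Sum>k\<in>{1..n}. (\<integral>\<omega>. a j * a k * (R j \<omega> * R k \<omega>) \<partial>M))"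
    proof (rule int_bnd_sum[OF M, where C="real n * real n * (B * B)"])
      fix k \<omega> assume k: "k \<in> {1..n}"
      show "(\<lambda>\<omega>. a j * a k * (R j \<omega> * R k \<omega>)) \<in> borel_measurable M" using j k by measurable
      show "\<bar>a j * a k * (R j \<omega> * R k \<omega>)\<bar> \<le> real n * real n * (B * B)" by (rule prodb[OF j k])
    qed simp
    then show "(\<integral>\<omega>. (\<Sum>k\<in>{1..n}. a j * a k * (R j \<omega> * R k \<omega>)) \<partial>M) = (\<Sum>k\<in>{1..n}. a j * a k * (\<integral>\<omega>. R j \<omega> * R k \<omega> \<partial>M))"
      by simp
  qed
  also have "\<dots> = (\<Sum>j\<in>{1..n}. \<Sum>k\<in>{1..n}. if k = j then a j * a j * (real (j - 1) / (real p * real q)) else 0)"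
    by (intro sum.cong refl) (simp add: RR)
  also have "\<dots> = (\<Sum>j\<in>{1..n}. a j * a j * (real (j - 1) / (real p * real q)))"
    by (intro sum.cong refl) (simp add: sum.delta')
  also have "\<dots> \<le> (\<Sum>j\<in>{1..n}. real n * real n * (real n / (real p * real q)))"
  proof (rule sum_mono)
    fix j assume j: "j \<in> {1..n}"
    have "a j * a j \<le> real n * real n" unfolding a_def by (intro mult_mono) auto
    moreover have "real (j - 1) / (real p * real q) \<le> real n / (real p * real q)"
      using p q j by (intro divide_right_mono) auto
    ultimately show "a j * a j * (real (j - 1) / (real p * real q)) \<le> real n * real n * (real n / (real p * real q))"
      by (intro mult_mono) (auto simp: a_def)
  qed
  also have "\<dots> = (real n)^4 / (real p * real q)"
    by (simp add: power4_eq_xxxx)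
  finally show ?thesis .
qed

lemma final_bound:
  assumes n: "n \<ge> 1"
  shows "(\<integral>\<omega>. ((\<Sum>l\<in>{1..n}. real_cond_exp M (past_algebra M p q X Y (l - 1))
              (\<lambda>\<omega>'. (DI n p q X Y l \<omega>')\<^sup>2) \<omega>) - 1)\<^sup>2 \<partial>M) \<le> 2 / (real n)\<^sup>2 + 32 / (real p * real q)"
proof -
  define c where "c = 4 / (real n)\<^sup>2"
  have AE1: "AE \<omega> in M. (\<Sum>l\<in>{1..n}. real_cond_exp M (past_algebra M p q X Y (l - 1))
              (\<lambda>\<omega>'. (DI n p q X Y l \<omega>')\<^sup>2) \<omega>) - 1 = - 1 / real n + c * T \<omega>"
  proof -
    have "AE \<omega> in M. \<forall>l\<in>{1..n}. real_cond_exp M (past_algebra M p q X Y (l - 1)) (\<lambda>\<omega>'. (DI n p q X Y l \<omega>')\<^sup>2) \<omega> =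
     2 / (real n)\<^sup>2 * (\<Sum>i\<in>{1..<l}. \<Sum>j\<in>{1..<l}. sprod p q (W i \<omega>) (W j \<omega>))"
      by (intro AE_finite_allI condexp_DI) auto
    with Sii show ?thesis
    proof eventually_elim
      case (elim \<omega>)
      have "(\<Sum>l\<in>{1..n}. real_cond_exp M (past_algebra M p q X Y (l - 1)) (\<lambda>\<omega>'. (DI n p q X Y l \<omega>')\<^sup>2) \<omega>) =
         (\<Sum>l\<in>{1..n}. 2 / (real n)\<^sup>2 * (\<Sum>i\<in>{1..<l}. \<Sum>j\<in>{1..<l}. sprod p q (W i \<omega>) (W j \<omega>)))"
        using elim(2) by simp
      also have "\<dots> = (\<Sum>l\<in>{1..n}. 2 / (real n)\<^sup>2 * (real (l - 1) + 2 * (\<Sum>j\<in>{1..<l}. R j \<omega>)))"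
      proof (rule sum.cong[OF refl])
        fix l assume l: "l \<in> {1..n}"
        have "(\<Sum>i\<in>{1..<l}. \<Sum>j\<in>{1..<l}. sprod p q (W i \<omega>) (W j \<omega>)) =
            real (l - 1) + 2 * (\<Sum>j\<in>{1..<l}. \<Sum>i\<in>{1..<j}. sprod p q (W i \<omega>) (W j \<omega>))"
          by (rule comb1[where s="\<lambda>i j. sprod p q (W i \<omega>) (W j \<omega>)"]) (use sprod_sym elim(1) l in auto)
        then show "2 / (real n)\<^sup>2 * (\<Sum>i\<in>{1..<l}. \<Sum>j\<in>{1..<l}. sprod p q (W i \<omega>) (W j \<omega>)) =
           2 / (real n)\<^sup>2 * (real (l - 1) + 2 * (\<Sum>j\<in>{1..<l}. R j \<omega>))"
          unfolding R_def by simp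
      qed
      also have "\<dots> = 2 / (real n)\<^sup>2 * ((\<Sum>l\<in>{1..n}. real (l - 1)) + 2 * (\<Sum>l\<in>{1..n}. \<Sum>j\<in>{1..<l}. R j \<omega>))"
        by (simp only: distrib_left sum.distrib sum_distrib_left)
      also have "\<dots> = 2 / (real n)\<^sup>2 * (real n * (real n - 1) / 2 + 2 * T \<omega>)"
        unfolding comb3 comb2 T_def ..
      finally show ?case using n unfolding c_def by (simp add: field_simps power2_eq_square)
    qed
  qed
  define B where "B \<omega> = 2 / (real n)\<^sup>2 + 2 * c\<^sup>2 * (T \<omega>)\<^sup>2" for \<omega>
  have intT: "integrable M (\<lambda>\<omega>. (T \<omega>)\<^sup>2)"
  proof (rule bnd_int[OF M, where C="(real n * (real n * (real n * (real p * real q))))\<^sup>2"])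
    show "\<bar>(T \<omega>)\<^sup>2\<bar> \<le> (real n * (real n * (real n * (real p * real q))))\<^sup>2" for \<omega>
    proof -
      have "\<bar>T \<omega>\<bar>\<^sup>2 \<le> (real n * (real n * (real n * (real p * real q))))\<^sup>2"
        by (rule power_mono[OF T_bound]) simp
      then show ?thesis by simp
    qed
  qed measurable
  have intB: "integrable M B" unfolding B_def using intT by simp
  have "(\<integral>\<omega>. ((\<Sum>l\<in>{1..n}. real_cond_exp M (past_algebra M p q X Y (l - 1))
              (\<lambda>\<omega>'. (DI n p q X Y l \<omega>')\<^sup>2) \<omega>) - 1)\<^sup>2 \<partial>M) \<le> (\<integral>\<omega>. B \<omega> \<partial>M)"
  proof (rule integral_mono_AE'[OF intB])
    show "AE \<omega> in M. 0 \<le> B \<omega>" unfolding B_def by simp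
    show "AE \<omega> in M. ((\<Sum>l\<in>{1..n}. real_cond_exp M (past_algebra M p q X Y (l - 1))
              (\<lambda>\<omega>'. (DI n p q X Y l \<omega>')\<^sup>2) \<omega>) - 1)\<^sup>2 \<le> B \<omega>"
      using AE1
    proof eventually_elim
      case (elim \<omega>)
      have "(- 1 / real n + c * T \<omega>)\<^sup>2 \<le> 2 * (- 1 / real n)\<^sup>2 + 2 * (c * T \<omega>)\<^sup>2"
        by (rule sq_sum_le)
      then show ?case unfolding elim B_def by (simp add: power_mult_distrib power_divide)
    qed
  qed
  also have "(\<integral>\<omega>. B \<omega> \<partial>M) = 2 / (real n)\<^sup>2 + 2 * c\<^sup>2 * (\<integral>\<omega>. (T \<omega>)\<^sup>2 \<partial>M)"
    unfolding B_def using intT prob_space by simp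
  also have "\<dots> \<le> 2 / (real n)\<^sup>2 + 2 * c\<^sup>2 * ((real n)^4 / (real p * real q))"
    by (intro add_left_mono mult_left_mono T_sq) auto
  also have "2 * c\<^sup>2 * ((real n)^4 / (real p * real q)) = 32 / (real p * real q)"
    unfolding c_def using n by (simp add: field_simps power2_eq_square power4_eq_xxxx)
  finally show ?thesis .
qed

end


theorem lemma5:
  fixes p q :: "nat \<Rightarrow> nat"
    and M :: "nat \<Rightarrow> 'a measure"
    and X Y :: "nat \<Rightarrow> nat \<Rightarrow> 'a \<Rightarrow> (nat \<Rightarrow> real)"
  assumes pos: "\<And>n. p n > 0 \<and> q n > 0"
    and maxlim: "filterlim (\<lambda>n. max (p n) (q n)) at_top sequentially"
    and prob: "\<And>n. prob_space (M n)"
    and meas: "\<And>n i. i \<in> {1..n} \<Longrightarrow>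
         (\<lambda>\<omega>. (X n i \<omega>, Y n i \<omega>)) \<in> measurable (M n) (lebesgue_p (p n) \<Otimes>\<^sub>M lebesgue_p (q n))"
    and indep: "\<And>n. prob_space.indep_vars (M n) (\<lambda>_. lebesgue_p (p n) \<Otimes>\<^sub>M lebesgue_p (q n))
                        (\<lambda>i \<omega>. (X n i \<omega>, Y n i \<omega>)) {1..n}"
    and ident: "\<And>n i. i \<in> {1..n} \<Longrightarrow>
         distr (M n) (lebesgue_p (p n) \<Otimes>\<^sub>M lebesgue_p (q n)) (\<lambda>\<omega>. (X n i \<omega>, Y n i \<omega>))
       = distr (M n) (lebesgue_p (p n) \<Otimes>\<^sub>M lebesgue_p (q n)) (\<lambda>\<omega>. (X n 1 \<omega>, Y n 1 \<omega>))"
    and XYindep: "\<And>n i. i \<in> {1..n} \<Longrightarrow>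
         prob_space.indep_var (M n) (lebesgue_p (p n)) (X n i) (lebesgue_p (q n)) (Y n i)"
    and sphX: "\<And>n i. i \<in> {1..n} \<Longrightarrow> spherical_directions (M n) (p n) (X n i)"
    and sphY: "\<And>n i. i \<in> {1..n} \<Longrightarrow> spherical_directions (M n) (q n) (Y n i)"
  shows "(\<lambda>n. \<integral>\<omega>. ((\<Sum>l\<in>{1..n}.
              real_cond_exp (M n) (past_algebra (M n) (p n) (q n) (X n) (Y n) (l - 1))
                 (\<lambda>\<omega>'. (DI n (p n) (q n) (X n) (Y n) l \<omega>')\<^sup>2) \<omega>) - 1)\<^sup>2 \<partial>M n)
         \<longlonglongrightarrow> 0"
proof -
  define E where "E n = (\<integral>\<omega>. ((\<Sum>l\<in>{1..n}.
              real_cond_exp (M n) (past_algebra (M n) (p n) (q n) (X n) (Y n) (l - 1))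
                 (\<lambda>\<omega>'. (DI n (p n) (q n) (X n) (Y n) l \<omega>')\<^sup>2) \<omega>) - 1)\<^sup>2 \<partial>M n)" for n
  define b where "b n = 2 / (real n)\<^sup>2 + 32 / (real (p n) * real (q n))" for n
  have fx: "fixn (M n) (p n) (q n) n (X n) (Y n)" for n
  proof (rule fixn.intro)
    show "prob_space (M n)" by (rule prob)
    show "0 < p n" using pos[of n] by simp
    show "0 < q n" using pos[of n] by simp
    show "prob_space.indep_vars (M n) (\<lambda>_. lebesgue_p (p n) \<Otimes>\<^sub>M lebesgue_p (q n)) (\<lambda>i \<omega>. (X n i \<omega>, Y n i \<omega>)) {1..n}"
      by (rule indep)
    fix i assume i: "i \<in> {1..n}"
    show "(\<lambda>\<omega>. (X n i \<omega>, Y n i \<omega>)) \<in> M n \<rightarrow>\<^sub>M lebesgue_p (p n) \<Otimes>\<^sub>M lebesgue_p (q n)" by (rule meas[OF i])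
    show "prob_space.indep_var (M n) (lebesgue_p (p n)) (X n i) (lebesgue_p (q n)) (Y n i)" by (rule XYindep[OF i])
    show "spherical_directions (M n) (p n) (X n i)" by (rule sphX[OF i])
    show "spherical_directions (M n) (q n) (Y n i)" by (rule sphY[OF i])
  qed
  have le: "E n \<le> b n" if "n \<ge> 1" for n
    unfolding E_def b_def by (rule fixn.final_bound[OF fx that])
  have ge: "0 \<le> E n" for n unfolding E_def by (rule Bochner_Integration.integral_nonneg) simp
  have b1: "(\<lambda>n. 2 / (real n)\<^sup>2) \<longlonglongrightarrow> 0"
    by (intro tendsto_divide_0[OF tendsto_const] filterlim_at_top_imp_at_infinity
        filterlim_pow_at_top filterlim_real_sequentially) simp
  have pq: "filterlim (\<lambda>n. p n * q n) at_top sequentially"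
  proof (rule filterlim_at_top_mono[OF maxlim])
    show "\<forall>\<^sub>F n in sequentially. max (p n) (q n) \<le> p n * q n"
    proof (rule always_eventually, rule allI)
      fix n
      have "p n \<ge> 1" "q n \<ge> 1" using pos[of n] by auto
      then show "max (p n) (q n) \<le> p n * q n"
      proof -
        have "p n \<le> p n * q n" using \<open>q n \<ge> 1\<close> by simp
        moreover have "q n \<le> p n * q n" using \<open>p n \<ge> 1\<close> by simp
        ultimately show ?thesis by simp
      qed
    qed
  qed
  have pqr: "filterlim (\<lambda>n. real (p n) * real (q n)) at_top sequentially"
    using filterlim_compose[OF filterlim_real_sequentially pq] by (simp add: o_def)
  have b2: "(\<lambda>n. 32 / (real (p n) * real (q n))) \<longlonglongrightarrow> 0"
    by (intro tendsto_divide_0[OF tendsto_const] filterlim_at_top_imp_at_infinity pqr)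
  have bl: "b \<longlonglongrightarrow> 0"
    unfolding b_def using tendsto_add[OF b1 b2] by simp
  have "E \<longlonglongrightarrow> 0"
  proof (rule tendsto_sandwich[OF _ _ tendsto_const bl])
    show "\<forall>\<^sub>F n in sequentially. 0 \<le> E n" using ge by simp
    show "\<forall>\<^sub>F n in sequentially. E n \<le> b n"
      using le by (intro eventually_sequentiallyI[of 1]) auto
  qed
  then show ?thesis unfolding E_def .
qed

end
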